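(* In the $N$-body setting of the context, let $\mathcal S$ be any set of particle pairs, enumerated in any order, and define $$\psi^{\mathrm{[KDBK]^2}}_h=e^{\frac h6\hat V_c}\,\phi^{\dagger s}_{h/2}\,e^{\frac{2h}3\hat V_c}\,\phi^s_{h/2}\,e^{\frac h6\hat V_c}.$$ Then $$H^{\mathrm{[KDBK]^2}}_{\mathrm{err}}=\frac{h^2}{48}\{\{T,V_s\},V_s\}_3+\frac{h^2}{72}\{\{T,V_c\},V_c\}+\mathcal O(h^4);$$ in particular no term $\{\{T,V_s\},V_c\}$ appears at order $h^2$.
   Context: Particles $i=1,\dots,N$ with masses $m_i>0$, positions $\vec x_i$, momenta $\vec p_i$ in $\mathbb R^3$; $G_N>0$. $T_i=\vec p_i^{\,2}/(2m_i)$, $T=\sum_iT_i$, $V_{ij}=-G_Nm_im_j/|\vec x_i-\vec x_j|$, $V=\sum_{i<j}V_{ij}$, $H=T+V$. $\mathcal S$ is a set of unordered pairs $\{i,j\}$; $V_s=\sum_{\{i,j\}\in\mathcal S}V_{ij}$, $V_c=V-V_s$. Poisson bracket $\{A,B\}=\sum_i(\partial_{\vec x_i}A\cdot\partial_{\vec p_i}B-\partial_{\vec p_i}A\cdot\partial_{\vec x_i}B)$; Lie operator $\hat Ff=\{f,F\}$, $e^{t\hat F}=\sum_kt^k\hat F^k/k!$; $[\hat A,\hat B]=\widehat{\{B,A\}}$. The surrogate Hamiltonian $\tilde H$ of a product $\Psi_h$ of such exponentials is the formal power series in $h$ with $\Psi_h=\exp(h\widehat{\tilde H})$ from the Baker–Campbell–Hausdorff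 formula; $H_{\mathrm{err}}=\tilde H-H$; $\mathcal O(h^k)$ means terms of order $\ge k$. Enumerate $\mathcal S$ as $(i_n,j_n)$, $n=1,\dots,K_s$; $H_n=T_{i_n}+T_{j_n}+V_{i_nj_n}$; $B_n(h)=e^{h\hat H_n}e^{-h(\hat T_{i_n}+\hat T_{j_n})}$, $B_n^\dagger(h)=e^{-h(\hat T_{i_n}+\hat T_{j_n})}e^{h\hat H_n}$; $\psi^{W_s}_h=B_{K_s}(h)\cdots B_1(h)$, $\psi^{\dagger W_s}_h=B_1^\dagger(h)\cdots B_{K_s}^\dagger(h)$; $\phi^s_h=\psi^{W_s}_he^{h\hat T}$, $\phi^{\dagger s}_h=e^{h\hat T}\psi^{\dagger W_s}_h$. $\{\{T,V_s\},V_s\}_3=\{\{T,V_s\},V_s\}-\sum_{\{i,j\}\in\mathcal S}\{\{T,V_{ij}\},V_{ij}\}$. *)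

theory Defs
  imports "HOL-Analysis.Analysis"
begin

text \<open>Particles are indexed by a finite type 'n (N = CARD('n)).
  A phase-space point is a pair (positions, momenta).\<close>

type_synonym 'n phase = "('n \<Rightarrow> real^3) \<times> ('n \<Rightarrow> real^3)"

definition dxi :: "('n phase \<Rightarrow> real) \<Rightarrow> 'n \<Rightarrow> 3 \<Rightarrow> 'n phase \<Rightarrow> real" where
  "dxi F i k z = deriv (\<lambda>t. F ((fst z)(i := fst z i + t *\<^sub>R axis k 1), snd z)) 0"

definition dpi :: "('n phase \<Rightarrow> real) \<Rightarrow> 'n \<Rightarrow> 3 \<Rightarrow> 'n phase \<Rightarrow> real" where
  "dpi F i k z = deriv (\<lambda>t. F (fst z, (snd z)(i := snd z i + t *\<^sub>R axis k 1))) 0"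

definition poisson :: "('n::finite phase \<Rightarrow> real) \<Rightarrow> ('n phase \<Rightarrow> real) \<Rightarrow> 'n phase \<Rightarrow> real" where
  "poisson A B z = (\<Sum>i\<in>UNIV. \<Sum>k\<in>UNIV. dxi A i k z * dpi B i k z - dpi A i k z * dxi B i k z)"

text \<open>Lie bracket of functions corresponding to the commutator of Lie operators:
  [A^,B^] = ({B,A})^.\<close>
definition lb :: "('n::finite phase \<Rightarrow> real) \<Rightarrow> ('n phase \<Rightarrow> real) \<Rightarrow> 'n phase \<Rightarrow> real" where
  "lb A B = poisson B A"

definition Tk :: "('n \<Rightarrow> real) \<Rightarrow> 'n \<Rightarrow> 'n phase \<Rightarrow> real" where
  "Tk m i z = (norm (snd z i))\<^sup>2 / (2 * m i)"

definition Tkin :: "('n::finite \<Rightarrow> real) \<Rightarrow> 'n phase \<Rightarrow> real" where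
  "Tkin m z = (\<Sum>i\<in>UNIV. Tk m i z)"

definition Vp :: "real \<Rightarrow> ('n \<Rightarrow> real) \<Rightarrow> 'n \<Rightarrow> 'n \<Rightarrow> 'n phase \<Rightarrow> real" where
  "Vp G m i j z = - G * m i * m j / dist (fst z i) (fst z j)"

text \<open>V = sum over i<j of V_ij, written as half the sum over ordered pairs i ~= j.\<close>
definition Vpot :: "real \<Rightarrow> ('n::finite \<Rightarrow> real) \<Rightarrow> 'n phase \<Rightarrow> real" where
  "Vpot G m z = (\<Sum>i\<in>UNIV. \<Sum>j\<in>UNIV. if i \<noteq> j then Vp G m i j z else 0) / 2"

definition Ham :: "real \<Rightarrow> ('n::finite \<Rightarrow> real) \<Rightarrow> 'n phase \<Rightarrow> real" where
  "Ham G m z = Tkin m z + Vpot G m z"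

text \<open>V_s for an enumeration ps of the set S of pairs; V_c = V - V_s.\<close>
definition Vs :: "real \<Rightarrow> ('n \<Rightarrow> real) \<Rightarrow> ('n \<times> 'n) list \<Rightarrow> 'n phase \<Rightarrow> real" where
  "Vs G m ps z = sum_list (map (\<lambda>(i,j). Vp G m i j z) ps)"

definition Vc :: "real \<Rightarrow> ('n::finite \<Rightarrow> real) \<Rightarrow> ('n \<times> 'n) list \<Rightarrow> 'n phase \<Rightarrow> real" where
  "Vc G m ps z = Vpot G m z - Vs G m ps z"

definition Hpair :: "real \<Rightarrow> ('n \<Rightarrow> real) \<Rightarrow> 'n \<Rightarrow> 'n \<Rightarrow> 'n phase \<Rightarrow> real" where
  "Hpair G m i j z = Tk m i z + Tk m j z + Vp G m i j z"

definition TVsVs3 :: "real \<Rightarrow> ('n::finite \<Rightarrow> real) \<Rightarrow> ('n \<times> 'n) list \<Rightarrow> 'n phase \<Rightarrow> real" where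
  "TVsVs3 G m ps z = poisson (poisson (Tkin m) (Vs G m ps)) (Vs G m ps) z
     - sum_list (map (\<lambda>(i,j). poisson (poisson (Tkin m) (Vp G m i j)) (Vp G m i j) z) ps)"

text \<open>A product e^{h c_0 A_0^} ... e^{h c_{M-1} A_{M-1}^} (leftmost factor first) is
  represented by the list of pairs (c_a, A_a).
  The coefficient of a word w (letters a < M) in the noncommutative series
  log(e^{X_0} ... e^{X_{M-1}}) is logcoef w; by Dynkin--Specht--Wever its degree-n part
  equals sum_w logcoef w / n [X_{w1},[X_{w2},...,X_{wn}]].\<close>

definition ncoef :: "nat list \<Rightarrow> real" where
  "ncoef b = (if sorted b then 1 / (\<Prod>a\<in>set b. fact (count_list b a)) else 0)"

definition logcoef :: "nat list \<Rightarrow> real" where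
  "logcoef w = (\<Sum>bs\<in>{bs. concat bs = w \<and> [] \<notin> set bs}.
      (-1) ^ (length bs - 1) / real (length bs) * prod_list (map ncoef bs))"

fun nestf :: "(real \<times> ('n::finite phase \<Rightarrow> real)) list \<Rightarrow> nat list \<Rightarrow> 'n phase \<Rightarrow> real" where
  "nestf fs [] = (\<lambda>z. 0)"
| "nestf fs [a] = snd (fs ! a)"
| "nestf fs (a # w) = lb (snd (fs ! a)) (nestf fs w)"

text \<open>Coefficient of h^k in the surrogate Hamiltonian tilde H, where
  Psi_h = exp(h tildeH^) and h tildeH = sum_n h^n (degree-n BCH term).\<close>
definition surr :: "(real \<times> ('n::finite phase \<Rightarrow> real)) list \<Rightarrow> nat \<Rightarrow> 'n phase \<Rightarrow> real" where
  "surr fs k z = (let n = Suc k in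
     \<Sum>w\<in>{w. length w = n \<and> set w \<subseteq> {..<length fs}}.
        logcoef w * prod_list (map (\<lambda>a. fst (fs ! a)) w) / real n * nestf fs w z)"

text \<open>Factor lists (with step h/2 built into the coefficients):
  phi^s_{h/2} = B_K(h/2) ... B_1(h/2) e^{(h/2)T^},
  phi^{dagger s}_{h/2} = e^{(h/2)T^} B_1^dagger(h/2) ... B_K^dagger(h/2).\<close>

definition phi_s :: "real \<Rightarrow> ('n::finite \<Rightarrow> real) \<Rightarrow> ('n \<times> 'n) list \<Rightarrow> (real \<times> ('n phase \<Rightarrow> real)) list" where
  "phi_s G m ps =
     concat (map (\<lambda>(i,j). [(1/2, Hpair G m i j), (-1/2, \<lambda>z. Tk m i z + Tk m j z)]) (rev ps))
     @ [(1/2, Tkin m)]"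

definition phi_s_dag :: "real \<Rightarrow> ('n::finite \<Rightarrow> real) \<Rightarrow> ('n \<times> 'n) list \<Rightarrow> (real \<times> ('n phase \<Rightarrow> real)) list" where
  "phi_s_dag G m ps =
     [(1/2, Tkin m)] @
     concat (map (\<lambda>(i,j). [(-1/2, \<lambda>z. Tk m i z + Tk m j z), (1/2, Hpair G m i j)]) ps)"

definition KDBK2 :: "real \<Rightarrow> ('n::finite \<Rightarrow> real) \<Rightarrow> ('n \<times> 'n) list \<Rightarrow> (real \<times> ('n phase \<Rightarrow> real)) list" where
  "KDBK2 G m ps = [(1/6, Vc G m ps)] @ phi_s_dag G m ps @ [(2/3, Vc G m ps)]
                  @ phi_s G m ps @ [(1/6, Vc G m ps)]"

end

theory Submission
  imports Defs
begin

fun comps :: "'a list \<Rightarrow> 'a list list list" where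
  "comps [] = [[]]"
| "comps [x] = [[[x]]]"
| "comps (x # y # ys) = map (\<lambda>bs. [x] # bs) (comps (y # ys)) @ map (\<lambda>bs. (x # hd bs) # tl bs) (comps (y # ys))"

lemma nil_lemma: "[] \<notin> set l \<Longrightarrow> \<forall>xs\<in>set l. xs = [] \<Longrightarrow> l = []"
  by (cases l) auto

lemma comps_set: "set (comps w) = {bs. concat bs = w \<and> [] \<notin> set bs}"
proof (induction w rule: comps.induct)
  case 1
  show ?case by (auto; case_tac x; auto)
next
  case (2 x)
  show ?case
  proof (auto)
    fix bs assume "concat bs = [x]" "[] \<notin> set bs"
    then show "bs = [[x]]" by (cases bs) (auto simp: append_eq_Cons_conv nil_lemma)
  qed
next
  case (3 x y ys)
  show ?case
  proof (rule set_eqI, rule iffI)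
    fix bs assume "bs \<in> set (comps (x # y # ys))"
    then obtain bs' where bs': "bs' \<in> set (comps (y # ys))"
      and "bs = [x] # bs' \<or> bs = (x # hd bs') # tl bs'" by auto
    moreover have "concat bs' = y # ys" "[] \<notin> set bs'" using bs' 3 by auto
    moreover then obtain b0 rest where "bs' = b0 # rest" by (cases bs') auto
    ultimately show "bs \<in> {bs. concat bs = x # y # ys \<and> [] \<notin> set bs}" by auto
  next
    fix bs assume "bs \<in> {bs. concat bs = x # y # ys \<and> [] \<notin> set bs}"
    then have c: "concat bs = x # y # ys" and n: "[] \<notin> set bs" by auto
    obtain b rest where bs: "bs = b # rest" using c by (cases bs) auto
    have "b \<noteq> []" using n bs by auto
    then obtain b' where b: "b = x # b'" using c bs by (cases b) auto
    show "bs \<in> set (comps (x # y # ys))"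
    proof (cases "b' = []")
      case True
      then have "rest \<in> set (comps (y # ys))" using 3 c n bs b by auto
      then show ?thesis using bs b True by auto
    next
      case False
      then have "b' # rest \<in> set (comps (y # ys))" using 3 c n bs b by auto
      then show ?thesis using bs b False by (auto intro!: image_eqI[where x="b' # rest"])
    qed
  qed
qed

lemma comps_ne: "bs \<in> set (comps (y # ys)) \<Longrightarrow> bs \<noteq> [] \<and> [] \<notin> set bs \<and> concat bs = y # ys"
  unfolding comps_set by auto

lemma comps_distinct: "distinct (comps w)"
proof (induction w rule: comps.induct)
  case (3 x y ys)
  have "inj_on (\<lambda>bs. (x # hd bs) # tl bs) (set (comps (y # ys)))"
    using comps_ne[of _ y ys] by (intro inj_onI) (metis list.collapse list.inject)
  then show ?case using 3 comps_ne[of _ y ys]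
    by (auto simp: distinct_map inj_on_def; metis hd_in_set)
qed auto

lemma logcoef_comps: "logcoef w = (\<Sum>bs\<leftarrow>comps w. (-1) ^ (length bs - 1) / real (length bs) * prod_list (map ncoef bs))"
  unfolding logcoef_def comps_set[symmetric]
  by (simp add: sum_list_distinct_conv_sum_set comps_distinct)

lemma ncoef1: "ncoef [x] = 1" by (simp add: ncoef_def)
lemma ncoef2: "ncoef [x,y] = (if x < y then 1 else if x = y then 1/2 else 0)"
  by (auto simp: ncoef_def)
lemma ncoef3: "ncoef [x,y,z::nat] = (if x \<le> y \<and> y \<le> z then
   (if x = y then (if y = z then 1/6 else 1/2) else (if y = z then 1/2 else 1)) else 0)"
  by (auto simp: ncoef_def insert_commute)
lemma ncoef4: "ncoef [x,y,z,u::nat] = (if x \<le> y \<and> y \<le> z \<and> z \<le> u then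
   (if x = y then (if y = z then (if z = u then 1/24 else 1/6) else (if z = u then 1/4 else 1/2))
    else (if y = z then (if z = u then 1/6 else 1/2) else (if z = u then 1/2 else 1))) else 0)"
  unfolding ncoef_def
  by (cases "x \<le> y \<and> y \<le> z \<and> z \<le> u"; cases "x = y"; cases "y = z"; cases "z = u"; cases "x = z"; cases "y = u")
     (auto simp: insert_commute fact_numeral)

lemma logcoef2: "logcoef [a,b] = ncoef [a,b] - 1/2"
  by (simp add: logcoef_comps ncoef1)

lemma logcoef3: "logcoef [a,b,c] = ncoef [a,b,c] - (ncoef [b,c] + ncoef [a,b]) / 2 + 1/3"
  by (simp add: logcoef_comps ncoef1 field_simps)

lemma logcoef4: "logcoef [a,b,c,d] = ncoef [a,b,c,d]
   - (ncoef [b,c,d] + ncoef [a,b] * ncoef [c,d] + ncoef [a,b,c]) / 2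
   + (ncoef [c,d] + ncoef [b,c] + ncoef [a,b]) / 3 - 1/4"
  by (simp add: logcoef_comps ncoef1 field_simps)

lemma lc2_flip:
  fixes f :: "nat \<Rightarrow> nat"
  assumes "\<And>x y. x \<in> {a,b} \<Longrightarrow> y \<in> {a,b} \<Longrightarrow> f x < f y \<longleftrightarrow> y < x"
  shows "logcoef (map f [a,b]) = - logcoef [a,b]"
proof -
  have "f a < f b \<longleftrightarrow> b < a" "f b < f a \<longleftrightarrow> a < b" using assms by auto
  moreover have "f a = f b \<longleftrightarrow> a = b" using assms[of a b] assms[of b a]
    by (cases a b rule: linorder_cases) auto
  ultimately show ?thesis by (auto simp: logcoef2 ncoef2)
qed

lemma lc4_flip:
  fixes f :: "nat \<Rightarrow> nat"
  assumes A: "\<And>x y. x \<in> {a,b,c,d} \<Longrightarrow> y \<in> {a,b,c,d} \<Longrightarrow> f x < f y \<longleftrightarrow> y < x"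
  shows "logcoef (map f [a,b,c,d]) = - logcoef [a,b,c,d]"
proof -
  have E: "f x = f y \<longleftrightarrow> x = y" if "x \<in> {a,b,c,d}" "y \<in> {a,b,c,d}" for x y
    using A[OF that] A[OF that(2,1)] by (cases x y rule: linorder_cases) auto
  have L: "f x \<le> f y \<longleftrightarrow> y \<le> x" if "x \<in> {a,b,c,d}" "y \<in> {a,b,c,d}" for x y
    using A[OF that] A[OF that(2,1)] E[OF that] by auto
  note R = A[of a b] A[of a c] A[of a d] A[of b c] A[of b d] A[of c d]
    A[of b a] A[of c a] A[of d a] A[of c b] A[of d b] A[of d c]
    E[of a b] E[of a c] E[of a d] E[of b c] E[of b d] E[of c d]
    E[of b a] E[of c a] E[of d a] E[of c b] E[of d b] E[of d c]
    L[of a b] L[of a c] L[of a d] L[of b c] L[of b d] L[of c d]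
    L[of b a] L[of c a] L[of d a] L[of c b] L[of d b] L[of d c]
  show ?thesis
    apply (simp only: list.map logcoef4 ncoef2 ncoef3 ncoef4)
    apply (simp only: R insert_iff simp_thms)
    by (cases a b rule: linorder_cases; cases b c rule: linorder_cases; cases c d rule: linorder_cases;
        simp)
qed

lemma nestf_cong_idx:
  assumes "\<And>a. a \<in> set w \<Longrightarrow> fs ! (f a) = fs ! a"
  shows "nestf fs (map f w) = nestf fs w"
  using assms by (induction fs w rule: nestf.induct) auto

lemma surr_palin:
  assumes rv: "rev fs = fs" and k: "k = 1 \<or> k = 3"
  shows "surr fs k z = 0"
proof -
  define M where "M = length fs"
  define n where "n = Suc k"
  define W where "W = {w. length w = n \<and> set w \<subseteq> {..<M}}"
  define \<sigma> where "\<sigma> a = M - Suc a" for a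
  define F where "F w = logcoef w * prod_list (map (\<lambda>a. fst (fs ! a)) w) / real n * nestf fs w z" for w
  have s: "surr fs k z = (\<Sum>w\<in>W. F w)"
    by (simp add: surr_def Let_def F_def W_def M_def n_def)
  have fsig: "fs ! (\<sigma> a) = fs ! a" if "a < M" for a
  proof -
    have "fs ! a = rev fs ! a" using rv by simp
    also have "\<dots> = fs ! (\<sigma> a)" using that by (simp add: rev_nth M_def \<sigma>_def)
    finally show ?thesis by simp
  qed
  have sig_inv: "\<sigma> (\<sigma> a) = a" if "a < M" for a using that by (simp add: \<sigma>_def)
  have sig_lt: "\<sigma> a < M" if "a < M" for a using that by (simp add: \<sigma>_def)
  have mm: "map (\<sigma> \<circ> \<sigma>) w = w" if "w \<in> W" for w
    using that by (auto simp: W_def sig_inv intro!: map_idI)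
  have mW: "map \<sigma> w \<in> W" if "w \<in> W" for w
    using that sig_lt by (auto simp: W_def)
  have reidx: "(\<Sum>w\<in>W. F w) = (\<Sum>w\<in>W. F (map \<sigma> w))"
    by (rule sum.reindex_bij_witness[where i="map \<sigma>" and j="map \<sigma>"]) (auto simp: mm mW)
  have neg: "F (map \<sigma> w) = - F w" if "w \<in> W" for w
  proof -
    have w: "length w = n" "set w \<subseteq> {..<M}" using that by (auto simp: W_def)
    have ord: "\<sigma> x < \<sigma> y \<longleftrightarrow> y < x" if "x \<in> set w" "y \<in> set w" for x y
      using that w by (auto simp: \<sigma>_def)
    have lc: "logcoef (map \<sigma> w) = - logcoef w"
    proof (cases "k = 1")
      case True
      have "\<exists>a b. w = [a,b]" using w(1) n_def True by (auto simp: length_Suc_conv)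
      then obtain a b where "w = [a,b]" by blast
      then show ?thesis using ord lc2_flip[of a b \<sigma>] by auto
    next
      case False
      then have "length w = 4" using k w(1) n_def by auto
      then have "\<exists>a b c d. w = [a,b,c,d]" by (auto simp: length_Suc_conv numeral_eq_Suc)
      then obtain a b c d where "w = [a,b,c,d]" by blast
      then show ?thesis using ord lc4_flip[of a b c d \<sigma>] by auto
    qed
    have pl: "prod_list (map (\<lambda>a. fst (fs ! a)) (map \<sigma> w)) = prod_list (map (\<lambda>a. fst (fs ! a)) w)"
      using w(2) fsig by (auto intro!: arg_cong[where f=prod_list] map_cong)
    have nf: "nestf fs (map \<sigma> w) = nestf fs w"
      using w(2) fsig by (intro nestf_cong_idx) auto
    show ?thesis unfolding F_def lc pl nf by simp
  qed
  have "(\<Sum>w\<in>W. F w) = (\<Sum>w\<in>W. - F w)"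
    using reidx neg by simp
  then have "(\<Sum>w\<in>W. F w) = - (\<Sum>w\<in>W. F w)" by (simp add: sum_negf)
  then show ?thesis using s by linarith
qed

locale lie3 =
  fixes t :: "'v::real_vector \<Rightarrow> 'v \<Rightarrow> 'v \<Rightarrow> real"
  assumes t_add1: "t (x + x') y w = t x y w + t x' y w"
  and t_add2: "t x (y + y') w = t x y w + t x y' w"
  and t_add3: "t x y (w + w') = t x y w + t x y w'"
  and t_sc1: "t (c *\<^sub>R x) y w = c * t x y w"
  and t_sc2: "t x (c *\<^sub>R y) w = c * t x y w"
  and t_sc3: "t x y (c *\<^sub>R w) = c * t x y w"
  and t_anti: "t x y w = - t x w y"
  and t_jac: "t x y w + t y w x + t w x y = 0"
begin

lemma t_diag[simp]: "t x y y = 0" using t_anti[of x y y] by simp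

lemma t_zero[simp]: "t 0 y w = 0" "t x 0 w = 0" "t x y 0 = 0"
  using t_sc1[of 0 x y w] t_sc2[of x 0 y w] t_sc3[of x y 0 w] by auto

lemma t_minus: "t (- x) y w = - t x y w" "t x (- y) w = - t x y w" "t x y (- w) = - t x y w"
  using t_sc1[of "-1" x y w] t_sc2[of x "-1" y w] t_sc3[of x y "-1" w] by auto

lemma t_diff: "t (x - x') y w = t x y w - t x' y w" "t x (y - y') w = t x y w - t x y' w"
   "t x y (w - w') = t x y w - t x y w'"
  using t_add1[of x "- x'" y w] t_add2[of x y "- y'" w] t_add3[of x y w "- w'"] by (simp_all add: t_minus)

lemma t_sum1: "t (\<Sum>a\<in>A. f a) y w = (\<Sum>a\<in>A. t (f a) y w)"
  by (induction A rule: infinite_finite_induct) (auto simp: t_add1)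
lemma t_sum2: "t x (\<Sum>a\<in>A. f a) w = (\<Sum>a\<in>A. t x (f a) w)"
  by (induction A rule: infinite_finite_induct) (auto simp: t_add2)
lemma t_sum3: "t x y (\<Sum>a\<in>A. f a) = (\<Sum>a\<in>A. t x y (f a))"
  by (induction A rule: infinite_finite_induct) (auto simp: t_add3)

lemmas t_lin = t_add1 t_add2 t_add3 t_sc1 t_sc2 t_sc3 t_minus t_diff

definition X :: "(real \<times> 'v) list \<Rightarrow> nat \<Rightarrow> 'v" where
  "X ds a = fst (ds ! a) *\<^sub>R snd (ds ! a)"

definition S1 :: "(real \<times> 'v) list \<Rightarrow> 'v" where
  "S1 ds = (\<Sum>a<length ds. X ds a)"

definition P2 :: "(real \<times> 'v) list \<Rightarrow> 'v \<Rightarrow> real" where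
  "P2 ds y = (\<Sum>b<length ds. \<Sum>a<b. t y (X ds a) (X ds b))"

fun tt :: "(real \<times> 'v) list \<Rightarrow> nat list \<Rightarrow> real" where
  "tt ds [a,b,c] = t (snd (ds ! a)) (snd (ds ! b)) (snd (ds ! c))"
| "tt ds _ = 0"

definition E3 :: "(real \<times> 'v) list \<Rightarrow> real" where
  "E3 ds = (\<Sum>w\<in>{w. length w = 3 \<and> set w \<subseteq> {..<length ds}}.
      logcoef w * prod_list (map (\<lambda>a. fst (ds ! a)) w) / 3 * tt ds w)"

lemma words3: "{w. length w = 3 \<and> set w \<subseteq> {..<M}} =
   (\<lambda>(a,b,c). [a,b,c]) ` ({..<M} \<times> {..<M} \<times> {..<M})"
proof (rule set_eqI, rule iffI)
  fix w assume "w \<in> {w. length w = 3 \<and> set w \<subseteq> {..<M}}"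
  then have "length w = 3" "set w \<subseteq> {..<M}" by auto
  moreover from this(1) have "\<exists>a b c. w = [a,b,c]" by (auto simp: length_Suc_conv numeral_eq_Suc)
  ultimately show "w \<in> (\<lambda>(a,b,c). [a,b,c]) ` ({..<M} \<times> {..<M} \<times> {..<M})" by force
qed auto

lemma E3_triple: "E3 ds = (\<Sum>a<length ds. \<Sum>b<length ds. \<Sum>c<length ds.
    logcoef [a,b,c] * t (X ds a) (X ds b) (X ds c)) / 3"
proof -
  let ?M = "length ds"
  have inj: "inj_on (\<lambda>(a,b,c). [a,b,c::nat]) ({..<?M} \<times> {..<?M} \<times> {..<?M})"
    by (auto intro!: inj_onI)
  have "E3 ds = (\<Sum>(a,b,c)\<in>{..<?M} \<times> {..<?M} \<times> {..<?M}.
      logcoef [a,b,c] * (fst (ds!a) * fst (ds!b) * fst (ds!c)) / 3 * t (snd (ds ! a)) (snd (ds ! b)) (snd (ds ! c)))"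
    unfolding E3_def words3 by (subst sum.reindex[OF inj]) (simp add: case_prod_unfold mult.assoc)
  also have "\<dots> = (\<Sum>a<?M. \<Sum>b<?M. \<Sum>c<?M. logcoef [a,b,c] * t (X ds a) (X ds b) (X ds c) / 3)"
    by (simp add: sum.cartesian_product[symmetric] X_def t_lin mult_ac)
  finally show ?thesis by (simp add: sum_divide_distrib)
qed

lemma X_snoc: "a < length ds \<Longrightarrow> X (ds @ [(c,v)]) a = X ds a" "X (ds @ [(c,v)]) (length ds) = c *\<^sub>R v"
  by (auto simp: X_def nth_append)

lemma S1_snoc: "S1 (ds @ [(c,v)]) = S1 ds + c *\<^sub>R v"
  by (simp add: S1_def X_snoc)

lemma P2_snoc: "P2 (ds @ [(c,v)]) w = P2 ds w + t w (S1 ds) (c *\<^sub>R v)"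
  by (simp add: P2_def S1_def X_snoc t_sum2 sum.distrib)

lemma sum_sym_pair:
  fixes H K :: "nat \<Rightarrow> nat \<Rightarrow> real"
  assumes "\<And>a b. a \<in> A \<Longrightarrow> b \<in> A \<Longrightarrow> H a b + H b a = K a b + K b a"
  shows "(\<Sum>a\<in>A. \<Sum>b\<in>A. H a b) = (\<Sum>a\<in>A. \<Sum>b\<in>A. K a b)"
proof -
  have "2 * (\<Sum>a\<in>A. \<Sum>b\<in>A. H a b) = (\<Sum>a\<in>A. \<Sum>b\<in>A. H a b) + (\<Sum>a\<in>A. \<Sum>b\<in>A. H b a)"
    by (subst (2) sum.swap) simp
  also have "\<dots> = (\<Sum>a\<in>A. \<Sum>b\<in>A. H a b + H b a)" by (simp add: sum.distrib)
  also have "\<dots> = (\<Sum>a\<in>A. \<Sum>b\<in>A. K a b + K b a)" using assms by (auto intro!: sum.cong)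
  also have "\<dots> = (\<Sum>a\<in>A. \<Sum>b\<in>A. K a b) + (\<Sum>a\<in>A. \<Sum>b\<in>A. K b a)" by (simp add: sum.distrib)
  also have "\<dots> = 2 * (\<Sum>a\<in>A. \<Sum>b\<in>A. K a b)" by (subst (2) sum.swap) simp
  finally show ?thesis by simp
qed

lemma E3_snoc: "E3 (ds @ [(c,v)]) = E3 ds - P2 ds (c *\<^sub>R v) / 4
    + (t (S1 ds) (S1 ds) (c *\<^sub>R v) + t (c *\<^sub>R v) (c *\<^sub>R v) (S1 ds)) / 12"
proof -
  let ?M = "length ds"
  define y where "y = c *\<^sub>R v"
  define X' where "X' = X (ds @ [(c,v)])"
  have X'a: "X' a = X ds a" if "a < ?M" for a using that by (simp add: X'_def X_snoc)
  have X'M: "X' ?M = y" by (simp add: X'_def X_snoc y_def)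
  define G where "G a b d = logcoef [a,b,d] * t (X' a) (X' b) (X' d)" for a b d
  have "3 * E3 (ds @ [(c,v)]) = (\<Sum>a<Suc ?M. \<Sum>b<Suc ?M. \<Sum>d<Suc ?M. G a b d)"
    by (simp add: E3_triple G_def X'_def)
  also have "\<dots> = (\<Sum>a<?M. \<Sum>b<?M. \<Sum>d<?M. G a b d)
      + (\<Sum>a<?M. \<Sum>b<?M. G a b ?M + G a ?M b + G ?M a b)
      + (\<Sum>a<?M. G a ?M ?M + G ?M a ?M + G ?M ?M a) + G ?M ?M ?M"
    by (simp add: sum.distrib algebra_simps)
  finally have main: "3 * E3 (ds @ [(c,v)]) = (\<Sum>a<?M. \<Sum>b<?M. \<Sum>d<?M. G a b d)
      + (\<Sum>a<?M. \<Sum>b<?M. G a b ?M + G a ?M b + G ?M a b)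
      + (\<Sum>a<?M. G a ?M ?M + G ?M a ?M + G ?M ?M a) + G ?M ?M ?M" .
  have T0: "(\<Sum>a<?M. \<Sum>b<?M. \<Sum>d<?M. G a b d) = 3 * E3 ds"
    by (simp add: E3_triple G_def X'a)
  have T3: "G ?M ?M ?M = 0" by (simp add: G_def)
  have T2: "(\<Sum>a<?M. G a ?M ?M + G ?M a ?M + G ?M ?M a) = (\<Sum>a<?M. t y y (X ds a)) / 4"
  proof -
    have "G a ?M ?M + G ?M a ?M + G ?M ?M a = t y y (X ds a) / 4" if "a < ?M" for a
    proof -
      have "t y (X ds a) y = - t y y (X ds a)" by (rule t_anti)
      then show ?thesis using that
        by (simp add: G_def X'a X'M logcoef3 ncoef2 ncoef3)
    qed
    then have "(\<Sum>a<?M. G a ?M ?M + G ?M a ?M + G ?M ?M a) = (\<Sum>a<?M. t y y (X ds a) / 4)"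
      by (intro sum.cong) auto
    then show ?thesis by (simp add: sum_divide_distrib)
  qed
  define K where "K a b = (if a < b then - 3/4 * t y (X ds a) (X ds b) else 0) + t (X ds a) (X ds b) y / 4" for a b
  have T1: "(\<Sum>a<?M. \<Sum>b<?M. G a b ?M + G a ?M b + G ?M a b) = (\<Sum>a<?M. \<Sum>b<?M. K a b)"
  proof (rule sum_sym_pair)
    fix a b assume ab: "a \<in> {..<?M}" "b \<in> {..<?M}"
    let ?P = "t (X ds a) (X ds b) y" and ?Q = "t (X ds b) (X ds a) y" and ?R = "t y (X ds a) (X ds b)"
    have f1: "t (X ds a) y (X ds b) = - ?P" "t (X ds b) y (X ds a) = - ?Q" "t y (X ds b) (X ds a) = - ?R"
      "t (X ds a) y (X ds a) = - t (X ds a) (X ds a) y"  "t y (X ds a) (X ds a) = 0"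
      by (auto intro: t_anti)
    have j: "?P + t (X ds b) y (X ds a) + ?R = 0" by (rule t_jac)
    show "G a b ?M + G a ?M b + G ?M a b + (G b a ?M + G b ?M a + G ?M b a) = K a b + K b a"
      using ab f1 j by (cases a b rule: linorder_cases) (auto simp: G_def K_def X'a X'M logcoef3 ncoef2 ncoef3)
  qed
  have T1': "(\<Sum>a<?M. \<Sum>b<?M. K a b) = - 3/4 * P2 ds y + t (S1 ds) (S1 ds) y / 4"
  proof -
    have "(\<Sum>a<?M. \<Sum>b<?M. K a b) = (\<Sum>a<?M. \<Sum>b<?M. if a < b then - 3/4 * t y (X ds a) (X ds b) else 0)
       + (\<Sum>a<?M. \<Sum>b<?M. t (X ds a) (X ds b) y / 4)"
      by (simp add: K_def sum.distrib)
    also have "(\<Sum>a<?M. \<Sum>b<?M. if a < b then - 3/4 * t y (X ds a) (X ds b) else 0)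
        = (\<Sum>b<?M. \<Sum>a<?M. if a < b then - 3/4 * t y (X ds a) (X ds b) else 0)"
      by (rule sum.swap)
    also have "\<dots> = (\<Sum>b<?M. \<Sum>a<b. - 3/4 * t y (X ds a) (X ds b))"
    proof (rule sum.cong[OF refl])
      fix b assume "b \<in> {..<?M}"
      then have e: "{..<b} = {a \<in> {..<?M}. a < b}" by auto
      show "(\<Sum>a<?M. if a < b then - 3/4 * t y (X ds a) (X ds b) else 0) = (\<Sum>a<b. - 3/4 * t y (X ds a) (X ds b))"
        unfolding e by (subst sum.inter_filter) auto
    qed
    also have "\<dots> = - 3/4 * P2 ds y" by (simp add: P2_def sum_distrib_left)
    also have "(\<Sum>a<?M. \<Sum>b<?M. t (X ds a) (X ds b) y / 4) = t (S1 ds) (S1 ds) y / 4"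
      by (simp add: S1_def t_sum1 t_sum2 sum_divide_distrib; subst sum.swap; simp)
    finally show ?thesis .
  qed
  have "(\<Sum>a<?M. t y y (X ds a)) = t y y (S1 ds)" by (simp add: S1_def t_sum3)
  then show ?thesis using main T0 T1 T1' T2 T3 unfolding y_def[symmetric] by (simp add: field_simps)
qed

lemma E3_Nil: "E3 [] = 0" by (simp add: E3_triple)
lemma P2_Nil: "P2 [] y = 0" by (simp add: P2_def)
lemma S1_Nil: "S1 [] = 0" by (simp add: S1_def)

lemma S1_single[simp]: "S1 [(c,v)] = c *\<^sub>R v" by (simp add: S1_def X_def)
lemma P2_single[simp]: "P2 [(c,v)] y = 0" by (simp add: P2_def)

lemma P2_add: "P2 ds (y + y') = P2 ds y + P2 ds y'" by (simp add: P2_def t_add1 sum.distrib)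

lemma S1_append: "S1 (A @ B) = S1 A + S1 B"
  by (induction B rule: rev_induct) (auto simp: S1_Nil S1_snoc simp flip: append_assoc)

lemma P2_append: "P2 (A @ B) y = P2 A y + P2 B y + t y (S1 A) (S1 B)"
  by (induction B rule: rev_induct) (auto simp: P2_Nil S1_Nil P2_snoc S1_snoc S1_append t_lin algebra_simps simp flip: append_assoc)

lemma E3_append: "E3 (A @ B) = E3 A + E3 B + (P2 B (S1 A) - P2 A (S1 B)) / 4
   + (t (S1 A) (S1 A) (S1 B) + t (S1 B) (S1 B) (S1 A)) / 12"
proof (induction B rule: rev_induct)
  case Nil
  then show ?case by (simp add: E3_Nil P2_Nil S1_Nil P2_def)
next
  case (snoc x B)
  obtain c v where x: "x = (c,v)" by fastforce
  define y where "y = c *\<^sub>R v"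
  let ?A = "S1 A" and ?B = "S1 B"
  have e1: "E3 ((A @ B) @ [x]) = E3 (A @ B) - P2 (A @ B) y / 4 + (t (?A + ?B) (?A + ?B) y + t y y (?A + ?B)) / 12"
    unfolding x E3_snoc y_def S1_append ..
  have e2: "E3 (B @ [x]) = E3 B - P2 B y / 4 + (t ?B ?B y + t y y ?B) / 12"
    unfolding x E3_snoc y_def ..
  have p1: "P2 (B @ [x]) w = P2 B w + t w ?B y" for w unfolding x P2_snoc y_def ..
  have p2: "P2 (A @ B) w = P2 A w + P2 B w + t w ?A ?B" for w by (rule P2_append)
  have s1: "S1 (B @ [x]) = ?B + y" unfolding x S1_snoc y_def ..
  have j: "t ?A ?B y + t ?B y ?A + t y ?A ?B = 0" by (rule t_jac)
  have a: "t ?B y ?A = - t ?B ?A y" "t y ?B ?A = - t y ?A ?B" by (rule t_anti)+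
  show ?case
    unfolding append_assoc[symmetric] e1 e2 p1 p2 s1 snoc P2_add
    using j a by (simp add: t_add1 t_add2 t_add3 field_simps)
qed

lemma E3_single: "E3 [(c,v)] = 0"
  using E3_snoc[of "[]" c v] by (simp add: E3_Nil P2_Nil S1_Nil)

lemma E3_two: "E3 [(c1,v1),(c2,v2)] = (t (c1 *\<^sub>R v1) (c1 *\<^sub>R v1) (c2 *\<^sub>R v2) + t (c2 *\<^sub>R v2) (c2 *\<^sub>R v2) (c1 *\<^sub>R v1)) / 12"
  using E3_snoc[of "[(c1,v1)]" c2 v2] by (simp add: E3_single)

lemma P2_two: "P2 [(c1,v1),(c2,v2)] w = t w (c1 *\<^sub>R v1) (c2 *\<^sub>R v2)"
  using P2_snoc[of "[(c1,v1)]" c2 v2] by simp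

lemma S1_two: "S1 [(c1,v1),(c2,v2)] = c1 *\<^sub>R v1 + c2 *\<^sub>R v2"
  using S1_append[of "[(c1,v1)]" "[(c2,v2)]"] by simp

lemma sandwich:
  assumes Q: "\<And>w. P2 Q w = 0" and B': "\<And>w. P2 B' w = - P2 B w" "E3 B' = E3 B" "S1 B' = S1 B"
  shows "E3 (B @ Q @ B') = E3 Q + 2 * E3 B - P2 B (S1 Q) / 2 - P2 B (S1 B) / 2
            - t (S1 B) (S1 B) (S1 Q) / 6 + t (S1 Q) (S1 Q) (S1 B) / 6"
    and "P2 (B @ Q @ B') w = 0"
    and "S1 (B @ Q @ B') = S1 B + S1 B + S1 Q"
proof -
  let ?a = "S1 B" and ?q = "S1 Q"
  have an: "t ?a ?q ?a = - t ?a ?a ?q" "t w ?q ?a = - t w ?a ?q" by (rule t_anti)+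
  show "E3 (B @ Q @ B') = E3 Q + 2 * E3 B - P2 B (S1 Q) / 2 - P2 B (S1 B) / 2
            - t (S1 B) (S1 B) (S1 Q) / 6 + t (S1 Q) (S1 Q) (S1 B) / 6"
    unfolding append_assoc[symmetric] E3_append P2_append S1_append Q B' P2_add
    using an by (simp add: t_add1 t_add2 t_add3 field_simps)
  show "P2 (B @ Q @ B') w = 0"
    unfolding append_assoc[symmetric] P2_append S1_append Q B'
    using an by (simp add: t_add1 t_add2 t_add3 field_simps)
  show "S1 (B @ Q @ B') = S1 B + S1 B + S1 Q"
    unfolding S1_append B' by simp
qed

end

definition xsm :: "(('n \<Rightarrow> real^3) \<Rightarrow> real) \<Rightarrow> ('n \<Rightarrow> 3 \<Rightarrow> ('n \<Rightarrow> real^3) \<Rightarrow> real)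
    \<Rightarrow> ('n \<Rightarrow> 3 \<Rightarrow> 'n \<Rightarrow> 3 \<Rightarrow> ('n \<Rightarrow> real^3) \<Rightarrow> real) \<Rightarrow> bool" where
  "xsm W g h \<longleftrightarrow>
    (\<forall>x i k. inj x \<longrightarrow> ((\<lambda>t. W (x(i := x i + t *\<^sub>R axis k 1))) has_real_derivative g i k x) (at 0))
  \<and> (\<forall>x i k j l. inj x \<longrightarrow> ((\<lambda>t. g j l (x(i := x i + t *\<^sub>R axis k 1))) has_real_derivative h j l i k x) (at 0))
  \<and> (\<forall>x i k j l. inj x \<longrightarrow> h j l i k x = h i k j l x)"

definition rep :: "('n::finite phase \<Rightarrow> real) \<Rightarrow> ('n \<Rightarrow> real) \<Rightarrow> (('n \<Rightarrow> real^3) \<Rightarrow> real)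
    \<Rightarrow> ('n \<Rightarrow> 3 \<Rightarrow> ('n \<Rightarrow> real^3) \<Rightarrow> real) \<Rightarrow> ('n \<Rightarrow> 3 \<Rightarrow> 'n \<Rightarrow> 3 \<Rightarrow> ('n \<Rightarrow> real^3) \<Rightarrow> real) \<Rightarrow> bool" where
  "rep f a W g h \<longleftrightarrow> (\<forall>z. f z = (\<Sum>j\<in>UNIV. a j * (norm (snd z j))\<^sup>2) + W (fst z)) \<and> xsm W g h"

lemma norm2_deriv: "((\<lambda>t. (norm (v + t *\<^sub>R w))\<^sup>2) has_real_derivative 2 * (v \<bullet> w)) (at 0)"
proof -
  have eq: "(\<lambda>t. (norm (v + t *\<^sub>R w))\<^sup>2) = (\<lambda>t. v \<bullet> v + 2 * t * (v \<bullet> w) + t\<^sup>2 * (w \<bullet> w))"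
    by (rule ext) (simp only: power2_norm_eq_inner inner_add_left inner_add_right inner_scaleR_left
        inner_scaleR_right inner_commute[of w v]; simp add: power2_eq_square algebra_simps)
  show ?thesis unfolding eq by (auto intro!: derivative_eq_intros)
qed

lemma inj_upd: "inj x \<Longrightarrow> (\<And>j. j \<noteq> i \<Longrightarrow> y \<noteq> x j) \<Longrightarrow> inj (x(i := y))"
  unfolding inj_def by (metis fun_upd_apply)

lemma line_inj_ev:
  fixes x :: "'n::finite \<Rightarrow> real^3"
  assumes "inj x"
  shows "\<forall>\<^sub>F t in nhds 0. inj (x(i := x i + t *\<^sub>R v))"
proof -
  have "\<forall>\<^sub>F t in nhds 0. x i + t *\<^sub>R v \<noteq> x j" if "j \<noteq> i" for j
  proof (rule tendsto_imp_eventually_ne)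
    show "((\<lambda>t. x i + t *\<^sub>R v) \<longlongrightarrow> x i + 0 *\<^sub>R v) (nhds 0)"
      by (intro tendsto_intros) (auto simp: filterlim_ident)
    show "x i + 0 *\<^sub>R v \<noteq> x j" using assms that by (auto simp: inj_def)
  qed
  then have "\<forall>\<^sub>F t in nhds 0. \<forall>j. j \<noteq> i \<longrightarrow> x i + t *\<^sub>R v \<noteq> x j"
    by (intro eventually_all_finite) (auto intro: eventually_mono)
  then show ?thesis by eventually_elim (use assms in \<open>auto intro: inj_upd\<close>)
qed

lemma rep_dxi:
  assumes "rep f a W g h" "inj (fst z)"
  shows "dxi f i k z = g i k (fst z)"
proof -
  have f: "f (y, snd z) = (\<Sum>j\<in>UNIV. a j * (norm (snd z j))\<^sup>2) + W y" for y using assms(1) by (simp add: rep_def)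
  have "((\<lambda>t. W ((fst z)(i := fst z i + t *\<^sub>R axis k 1))) has_real_derivative g i k (fst z)) (at 0)"
    using assms by (simp add: rep_def xsm_def)
  then have "((\<lambda>t. f ((fst z)(i := fst z i + t *\<^sub>R axis k 1), snd z)) has_real_derivative 0 + g i k (fst z)) (at 0)"
    unfolding f by (intro derivative_intros)
  then show ?thesis unfolding dxi_def by (simp add: DERIV_imp_deriv)
qed

lemma rep_dpi:
  assumes "rep f a W g h"
  shows "dpi f i k z = 2 * a i * (snd z i $ k)"
proof -
  have f: "f (fst z, q) = (\<Sum>j\<in>UNIV. a j * (norm (q j))\<^sup>2) + W (fst z)" for q using assms(1) by (simp add: rep_def)
  have d: "((\<lambda>t. a j * (norm (((snd z)(i := snd z i + t *\<^sub>R axis k 1)) j))\<^sup>2) has_real_derivative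
       (if j = i then 2 * a i * (snd z i $ k) else 0)) (at 0)" for j
  proof (cases "j = i")
    case True
    have "((\<lambda>t. a i * (norm (snd z i + t *\<^sub>R axis k 1))\<^sup>2) has_real_derivative a i * (2 * (snd z i \<bullet> axis k 1))) (at 0)"
      by (intro DERIV_cmult norm2_deriv)
    then show ?thesis using True by (simp add: inner_axis algebra_simps)
  next
    case False
    then show ?thesis by simp
  qed
  have "((\<lambda>t. f (fst z, (snd z)(i := snd z i + t *\<^sub>R axis k 1))) has_real_derivative
      (\<Sum>j\<in>UNIV. if j = i then 2 * a i * (snd z i $ k) else 0) + 0) (at 0)"
    unfolding f by (intro derivative_intros DERIV_sum d)
  then show ?thesis unfolding dpi_def by (simp add: DERIV_imp_deriv)
qed

definition Fb :: "('n \<Rightarrow> real) \<Rightarrow> ('n \<Rightarrow> 3 \<Rightarrow> ('n \<Rightarrow> real^3) \<Rightarrow> real) \<Rightarrow> ('n \<Rightarrow> real) \<Rightarrow> ('n \<Rightarrow> 3 \<Rightarrow> ('n \<Rightarrow> real^3) \<Rightarrow> real)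
   \<Rightarrow> 'n \<Rightarrow> 3 \<Rightarrow> ('n \<Rightarrow> real^3) \<Rightarrow> real" where
  "Fb a1 g1 a2 g2 i k x = 2 * a1 i * g2 i k x - 2 * a2 i * g1 i k x"

lemma rep_lb2:
  assumes "rep f1 a1 W1 g1 h1" "rep f2 a2 W2 g2 h2" "inj (fst z)"
  shows "lb f1 f2 z = (\<Sum>i\<in>UNIV. \<Sum>k\<in>UNIV. snd z i $ k * Fb a1 g1 a2 g2 i k (fst z))"
  unfolding lb_def poisson_def using assms
  by (simp add: rep_dxi rep_dpi Fb_def algebra_simps)

lemma upd_comp: "((p :: 'n \<Rightarrow> real^3)(i := p i + t *\<^sub>R axis k 1)) j $ l = p j $ l + (if j = i \<and> l = k then t else 0)"
  by (auto simp: axis_def)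

lemma sum_delta2: "(\<Sum>j\<in>(UNIV::'a::finite set). \<Sum>l\<in>(UNIV::'b::finite set). if j = i \<and> l = k then c else (0::real)) = c"
proof -
  have "(\<Sum>l\<in>(UNIV::'b set). if j = i \<and> l = k then c else 0) = (if j = i then c else 0)" for j
    by (cases "j = i") auto
  then show ?thesis by simp
qed

lemma rep_lb3:
  assumes r1: "rep f1 a1 W1 g1 h1" and r2: "rep f2 a2 W2 g2 h2" and r3: "rep f3 a3 W3 g3 h3" and inj: "inj (fst z)"
  shows "lb f3 (lb f1 f2) z = (\<Sum>i\<in>UNIV. \<Sum>k\<in>UNIV.
      (\<Sum>j\<in>UNIV. \<Sum>l\<in>UNIV. snd z j $ l * (2 * a1 j * h2 j l i k (fst z) - 2 * a2 j * h1 j l i k (fst z)))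
        * (2 * a3 i * snd z i $ k)
      - Fb a1 g1 a2 g2 i k (fst z) * g3 i k (fst z))"
proof -
  let ?x = "fst z" and ?p = "snd z"
  let ?L = "lb f1 f2"
  have dp: "dpi ?L i k z = Fb a1 g1 a2 g2 i k ?x" for i k
  proof -
    have e: "?L (?x, ?p(i := ?p i + t *\<^sub>R axis k 1)) =
        (\<Sum>j\<in>UNIV. \<Sum>l\<in>UNIV. (?p j $ l + (if j = i \<and> l = k then t else 0)) * Fb a1 g1 a2 g2 j l ?x)" for t
      using rep_lb2[OF r1 r2, of "(?x, ?p(i := ?p i + t *\<^sub>R axis k 1))"] inj by (simp del: fun_upd_apply add: upd_comp)
    have "((\<lambda>t. \<Sum>j\<in>UNIV. \<Sum>l\<in>UNIV. (?p j $ l + (if j = i \<and> l = k then t else 0)) * Fb a1 g1 a2 g2 j l ?x)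
        has_real_derivative (\<Sum>j\<in>UNIV. \<Sum>l\<in>UNIV. (if j = i \<and> l = k then 1 else 0) * Fb a1 g1 a2 g2 j l ?x)) (at 0)"
      by (intro DERIV_sum) (auto intro!: derivative_eq_intros)
    then show ?thesis unfolding dpi_def e
      by (simp add: DERIV_imp_deriv if_distrib[of "\<lambda>c. c * _"] sum_delta2 cong: if_cong)
  qed
  have dx: "dxi ?L i k z = (\<Sum>j\<in>UNIV. \<Sum>l\<in>UNIV. ?p j $ l * (2 * a1 j * h2 j l i k ?x - 2 * a2 j * h1 j l i k ?x))" for i k
  proof -
    let ?xt = "\<lambda>t. ?x(i := ?x i + t *\<^sub>R axis k 1)"
    have ev: "\<forall>\<^sub>F t in nhds 0. ?L (?xt t, ?p) = (\<Sum>j\<in>UNIV. \<Sum>l\<in>UNIV. ?p j $ l * Fb a1 g1 a2 g2 j l (?xt t))"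
      using line_inj_ev[OF inj, of i "axis k 1"]
      by eventually_elim (use rep_lb2[OF r1 r2] in auto)
    have g1: "((\<lambda>t. g1 j l (?xt t)) has_real_derivative h1 j l i k ?x) (at 0)"
     and g2: "((\<lambda>t. g2 j l (?xt t)) has_real_derivative h2 j l i k ?x) (at 0)" for j l
      using r1 r2 inj by (auto simp: rep_def xsm_def)
    have "((\<lambda>t. \<Sum>j\<in>UNIV. \<Sum>l\<in>UNIV. ?p j $ l * Fb a1 g1 a2 g2 j l (?xt t)) has_real_derivative
        (\<Sum>j\<in>UNIV. \<Sum>l\<in>UNIV. ?p j $ l * (2 * a1 j * h2 j l i k ?x - 2 * a2 j * h1 j l i k ?x))) (at 0)"
      unfolding Fb_def by (intro DERIV_sum DERIV_cmult DERIV_diff g1 g2)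
    then have "((\<lambda>t. ?L (?xt t, ?p)) has_real_derivative
        (\<Sum>j\<in>UNIV. \<Sum>l\<in>UNIV. ?p j $ l * (2 * a1 j * h2 j l i k ?x - 2 * a2 j * h1 j l i k ?x))) (at 0)"
      using DERIV_cong_ev[OF refl ev refl] by simp
    then show ?thesis unfolding dxi_def by (simp add: DERIV_imp_deriv)
  qed
  show ?thesis unfolding lb_def[of f3] poisson_def dp dx
    using r3 inj by (simp add: rep_dxi rep_dpi)
qed

lemma norm_deriv:
  fixes u v :: "real^3"
  assumes "u \<noteq> 0"
  shows "((\<lambda>t. norm (u + t *\<^sub>R v)) has_real_derivative (u \<bullet> v) / norm u) (at 0)"
proof -
  have e: "norm (u + t *\<^sub>R v) = sqrt ((norm (u + t *\<^sub>R v))\<^sup>2)" for t by simp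
  have pos: "0 < (norm (u + 0 *\<^sub>R v))\<^sup>2" using assms by simp
  have "((\<lambda>t. sqrt ((norm (u + t *\<^sub>R v))\<^sup>2)) has_real_derivative
      inverse (sqrt ((norm (u + 0 *\<^sub>R v))\<^sup>2)) / 2 * (2 * (u \<bullet> v))) (at 0)"
    by (rule DERIV_chain2[OF DERIV_real_sqrt[OF pos] norm2_deriv])
  then show ?thesis using assms by (simp add: divide_simps)
qed

lemma inv_norm_deriv:
  fixes u v :: "real^3"
  assumes "u \<noteq> 0"
  shows "((\<lambda>t. 1 / norm (u + t *\<^sub>R v)) has_real_derivative - (u \<bullet> v) / norm u ^ 3) (at 0)"
proof -
  have "((\<lambda>t. 1 / norm (u + t *\<^sub>R v)) has_real_derivative
     (0 * norm (u + 0 *\<^sub>R v) - 1 * ((u \<bullet> v) / norm u)) / (norm (u + 0 *\<^sub>R v) * norm (u + 0 *\<^sub>R v))) (at 0)"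
    by (rule DERIV_divide[OF DERIV_const norm_deriv[OF assms]]) (use assms in simp)
  then show ?thesis using assms by (simp add: divide_simps power3_eq_cube mult.assoc)
qed

lemma phi_deriv:
  fixes u v :: "real^3"
  assumes "u \<noteq> 0"
  shows "((\<lambda>t. (u + t *\<^sub>R v) $ l / norm (u + t *\<^sub>R v) ^ 3) has_real_derivative
     v $ l / norm u ^ 3 - 3 * (u $ l) * (u \<bullet> v) / norm u ^ 5) (at 0)"
proof -
  have c: "((\<lambda>t. (u + t *\<^sub>R v) $ l) has_real_derivative v $ l) (at 0)"
    by (auto intro!: derivative_eq_intros)
  have p: "((\<lambda>t. norm (u + t *\<^sub>R v) ^ 3) has_real_derivative of_nat 3 * ((u \<bullet> v) / norm u * norm (u + 0 *\<^sub>R v) ^ (3 - Suc 0))) (at 0)"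
    by (rule DERIV_power[OF norm_deriv[OF assms]])
  have "((\<lambda>t. (u + t *\<^sub>R v) $ l / norm (u + t *\<^sub>R v) ^ 3) has_real_derivative
     (v $ l * norm (u + 0 *\<^sub>R v) ^ 3 - (u + 0 *\<^sub>R v) $ l * (of_nat 3 * ((u \<bullet> v) / norm u * norm (u + 0 *\<^sub>R v) ^ (3 - Suc 0))))
      / (norm (u + 0 *\<^sub>R v) ^ 3 * norm (u + 0 *\<^sub>R v) ^ 3)) (at 0)"
    by (rule DERIV_divide[OF c p]) (use assms in simp)
  then show ?thesis
    by (rule DERIV_cong) (use assms in \<open>simp add: field_simps eval_nat_numeral\<close>)
qed

lemma xsm_zero: "xsm (\<lambda>x. 0) (\<lambda>i k x. 0) (\<lambda>j l i k x. 0)"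
  by (simp add: xsm_def)

lemma xsm_add: "xsm W1 g1 h1 \<Longrightarrow> xsm W2 g2 h2 \<Longrightarrow>
   xsm (\<lambda>x. W1 x + W2 x) (\<lambda>i k x. g1 i k x + g2 i k x) (\<lambda>j l i k x. h1 j l i k x + h2 j l i k x)"
  unfolding xsm_def by (auto intro!: DERIV_add)

lemma xsm_scale: "xsm W g h \<Longrightarrow> xsm (\<lambda>x. c * W x) (\<lambda>i k x. c * g i k x) (\<lambda>j l i k x. c * h j l i k x)"
  unfolding xsm_def by (auto intro!: DERIV_cmult)

lemma rep_zero: "rep (\<lambda>z. 0) (\<lambda>j. 0) (\<lambda>x. 0) (\<lambda>i k x. 0) (\<lambda>j l i k x. 0)"
  by (simp add: rep_def xsm_zero)

lemma rep_add: "rep f1 a1 W1 g1 h1 \<Longrightarrow> rep f2 a2 W2 g2 h2 \<Longrightarrow>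
   rep (\<lambda>z. f1 z + f2 z) (\<lambda>j. a1 j + a2 j) (\<lambda>x. W1 x + W2 x) (\<lambda>i k x. g1 i k x + g2 i k x) (\<lambda>j l i k x. h1 j l i k x + h2 j l i k x)"
  unfolding rep_def by (auto simp: xsm_add algebra_simps sum.distrib)

lemma rep_scale: "rep f a W g h \<Longrightarrow>
   rep (\<lambda>z. c * f z) (\<lambda>j. c * a j) (\<lambda>x. c * W x) (\<lambda>i k x. c * g i k x) (\<lambda>j l i k x. c * h j l i k x)"
  unfolding rep_def by (auto simp: xsm_scale algebra_simps sum_distrib_left)

lemma rep_sum:
  assumes "\<And>s. s \<in> A \<Longrightarrow> rep (F s) (aa s) (WW s) (gg s) (hh s)"
  shows "rep (\<lambda>z. \<Sum>s\<in>A. F s z) (\<lambda>j. \<Sum>s\<in>A. aa s j) (\<lambda>x. \<Sum>s\<in>A. WW s x)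
     (\<lambda>i k x. \<Sum>s\<in>A. gg s i k x) (\<lambda>j l i k x. \<Sum>s\<in>A. hh s j l i k x)"
  using assms
proof (induction A rule: infinite_finite_induct)
  case (infinite A)
  then show ?case using rep_zero by simp
next
  case empty
  then show ?case using rep_zero by simp
next
  case (insert s A)
  have "rep (\<lambda>z. F s z + (\<Sum>s\<in>A. F s z)) (\<lambda>j. aa s j + (\<Sum>s\<in>A. aa s j)) (\<lambda>x. WW s x + (\<Sum>s\<in>A. WW s x))
     (\<lambda>i k x. gg s i k x + (\<Sum>s\<in>A. gg s i k x)) (\<lambda>j l i k x. hh s j l i k x + (\<Sum>s\<in>A. hh s j l i k x))"
    using insert by (intro rep_add) auto
  then show ?case using insert by simp
qed

lemma rep_sum_list:
  assumes "\<And>s. s \<in> set L \<Longrightarrow> rep (F s) (aa s) (WW s) (gg s) (hh s)"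
  shows "rep (\<lambda>z. sum_list (map (\<lambda>s. F s z) L)) (\<lambda>j. sum_list (map (\<lambda>s. aa s j) L)) (\<lambda>x. sum_list (map (\<lambda>s. WW s x) L))
     (\<lambda>i k x. sum_list (map (\<lambda>s. gg s i k x) L)) (\<lambda>j l i k x. sum_list (map (\<lambda>s. hh s j l i k x) L))"
  using assms
proof (induction L)
  case Nil
  then show ?case using rep_zero by simp
next
  case (Cons s L)
  then show ?case by (simp, intro rep_add) auto
qed

definition aT :: "('n \<Rightarrow> real) \<Rightarrow> 'n \<Rightarrow> 'n \<Rightarrow> real" where
  "aT m k j = (if j = k then 1 / (2 * m k) else 0)"

lemma rep_Tk: "rep (Tk m k) (aT m k) (\<lambda>x. 0) (\<lambda>i k x. 0) (\<lambda>j l i k x. 0)"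
proof -
  have "(\<Sum>j\<in>UNIV. aT m k j * (norm (snd z j))\<^sup>2) = Tk m k z" for z
    by (simp add: aT_def Tk_def if_distrib[of "\<lambda>c. c * _"] cong: if_cong)
  then show ?thesis by (simp add: rep_def xsm_zero)
qed

definition sg2 :: "'n \<Rightarrow> 'n \<Rightarrow> 'n \<Rightarrow> real" where
  "sg2 a b i = (if i = a then 1 else if i = b then -1 else 0)"

definition WV :: "real \<Rightarrow> ('n \<Rightarrow> real) \<Rightarrow> 'n \<Rightarrow> 'n \<Rightarrow> ('n \<Rightarrow> real^3) \<Rightarrow> real" where
  "WV G m a b x = - G * m a * m b / dist (x a) (x b)"

definition gV :: "real \<Rightarrow> ('n \<Rightarrow> real) \<Rightarrow> 'n \<Rightarrow> 'n \<Rightarrow> 'n \<Rightarrow> 3 \<Rightarrow> ('n \<Rightarrow> real^3) \<Rightarrow> real" where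
  "gV G m a b i k x = (- G * m a * m b) * sg2 a b i * (- ((x a - x b) $ k / norm (x a - x b) ^ 3))"

definition hV :: "real \<Rightarrow> ('n \<Rightarrow> real) \<Rightarrow> 'n \<Rightarrow> 'n \<Rightarrow> 'n \<Rightarrow> 3 \<Rightarrow> 'n \<Rightarrow> 3 \<Rightarrow> ('n \<Rightarrow> real^3) \<Rightarrow> real" where
  "hV G m a b j l i k x = (- G * m a * m b) * sg2 a b j * sg2 a b i *
     (- ((if l = k then 1 else 0) / norm (x a - x b) ^ 3 - 3 * ((x a - x b) $ l) * ((x a - x b) $ k) / norm (x a - x b) ^ 5))"

lemma axis_comp: "axis k (1::real) $ l = (if l = k then 1 else 0)" by (simp add: axis_def)

lemma line_diff:
  assumes "a \<noteq> b"
  shows "(x(i := x i + t *\<^sub>R axis k 1)) a - (x(i := x i + t *\<^sub>R axis k 1)) b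
     = (x a - x b) + t *\<^sub>R (sg2 a b i *\<^sub>R axis k (1::real))"
  using assms by (auto simp: sg2_def algebra_simps)

lemma rep_Vp:
  fixes a b :: "'n::finite"
  assumes ab: "a \<noteq> b"
  shows "rep (Vp G m a b) (\<lambda>j. 0) (WV G m a b) (gV G m a b) (hV G m a b)"
  unfolding rep_def
proof (intro conjI allI)
  fix z :: "'n phase"
  show "Vp G m a b z = (\<Sum>j\<in>UNIV. 0 * (norm (snd z j))\<^sup>2) + WV G m a b (fst z)"
    by (simp add: Vp_def WV_def)
next
  let ?c = "- G * m a * m b"
  show "xsm (WV G m a b) (gV G m a b) (hV G m a b)"
    unfolding xsm_def
  proof (intro conjI allI impI)
    fix x :: "'n \<Rightarrow> real^3" and i k assume "inj x"
    then have u: "x a - x b \<noteq> 0" using ab by (auto simp: inj_def)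
    have e: "WV G m a b (x(i := x i + t *\<^sub>R axis k 1)) = ?c * (1 / norm ((x a - x b) + t *\<^sub>R (sg2 a b i *\<^sub>R axis k (1::real))))" for t
      unfolding WV_def dist_norm line_diff[OF ab] by simp
    have "((\<lambda>t. ?c * (1 / norm ((x a - x b) + t *\<^sub>R (sg2 a b i *\<^sub>R axis k (1::real))))) has_real_derivative
       ?c * (- ((x a - x b) \<bullet> (sg2 a b i *\<^sub>R axis k 1)) / norm (x a - x b) ^ 3)) (at 0)"
      by (intro DERIV_cmult inv_norm_deriv u)
    then show "((\<lambda>t. WV G m a b (x(i := x i + t *\<^sub>R axis k 1))) has_real_derivative gV G m a b i k x) (at 0)"
      unfolding e by (rule DERIV_cong) (use u in \<open>simp add: gV_def inner_axis field_simps\<close>)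
  next
    fix x :: "'n \<Rightarrow> real^3" and i j :: 'n and k l :: 3 assume "inj x"
    then have u: "x a - x b \<noteq> 0" using ab by (auto simp: inj_def)
    let ?v = "sg2 a b i *\<^sub>R axis k (1::real)"
    have e: "gV G m a b j l (x(i := x i + t *\<^sub>R axis k 1)) =
        ?c * sg2 a b j * (- (((x a - x b) + t *\<^sub>R ?v) $ l / norm ((x a - x b) + t *\<^sub>R ?v) ^ 3))" for t
      unfolding gV_def line_diff[OF ab] by simp
    have "((\<lambda>t. ?c * sg2 a b j * (- (((x a - x b) + t *\<^sub>R ?v) $ l / norm ((x a - x b) + t *\<^sub>R ?v) ^ 3))) has_real_derivative
       ?c * sg2 a b j * (- (?v $ l / norm (x a - x b) ^ 3 - 3 * ((x a - x b) $ l) * ((x a - x b) \<bullet> ?v) / norm (x a - x b) ^ 5))) (at 0)"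
      by (intro DERIV_cmult DERIV_minus phi_deriv u)
    then show "((\<lambda>t. gV G m a b j l (x(i := x i + t *\<^sub>R axis k 1))) has_real_derivative hV G m a b j l i k x) (at 0)"
      unfolding e by (rule DERIV_cong) (auto simp: hV_def inner_axis axis_comp algebra_simps)
  next
    fix x :: "'n \<Rightarrow> real^3" and i j :: 'n and k l :: 3
    show "hV G m a b j l i k x = hV G m a b i k j l x"
      by (simp add: hV_def algebra_simps)
  qed
qed

type_synonym 'n dat = "(real^'n) \<times> ((real^3)^'n) \<times> ((((real^3)^'n)^3)^'n)"

definition HS :: "((((real^3)^'n)^3)^'n) \<Rightarrow> 'n \<Rightarrow> 3 \<Rightarrow> 'n \<Rightarrow> 3 \<Rightarrow> real" where
  "HS H j l i k = (H $ j $ l $ i $ k + H $ i $ k $ j $ l) / 2"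

definition Hq :: "('n::finite \<Rightarrow> real^3) \<Rightarrow> 'n dat \<Rightarrow> 'n dat \<Rightarrow> 'n dat \<Rightarrow> real" where
  "Hq p x y w = (\<Sum>(i,k,j,l)\<in>UNIV. p j $ l * p i $ k * fst x $ i * fst y $ j * HS (snd (snd w)) j l i k)"

definition Gq :: "'n::finite dat \<Rightarrow> 'n dat \<Rightarrow> 'n dat \<Rightarrow> real" where
  "Gq y w x = (\<Sum>(i,k)\<in>UNIV. fst y $ i * fst (snd w) $ i $ k * fst (snd x) $ i $ k)"

definition tz :: "('n::finite \<Rightarrow> real^3) \<Rightarrow> 'n dat \<Rightarrow> 'n dat \<Rightarrow> 'n dat \<Rightarrow> real" where
  "tz p x y w = 4 * (Hq p x y w - Hq p x w y) - 2 * (Gq y w x - Gq w y x)"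

lemma HS_add: "HS (H + H') j l i k = HS H j l i k + HS H' j l i k"
  by (simp add: HS_def add_divide_distrib)
lemma HS_scale: "HS (c *\<^sub>R H) j l i k = c * HS H j l i k"
  by (simp add: HS_def algebra_simps)
lemma HS_sym: "HS H i k j l = HS H j l i k"
  by (simp add: HS_def add.commute)

lemma Hq_add1: "Hq p (x + x') y w = Hq p x y w + Hq p x' y w"
  by (simp add: Hq_def case_prod_unfold algebra_simps sum.distrib)
lemma Hq_add2: "Hq p x (y + y') w = Hq p x y w + Hq p x y' w"
  by (simp add: Hq_def case_prod_unfold algebra_simps sum.distrib)
lemma Hq_add3: "Hq p x y (w + w') = Hq p x y w + Hq p x y w'"
  by (simp add: Hq_def case_prod_unfold algebra_simps sum.distrib HS_add)
lemma Hq_sc1: "Hq p (c *\<^sub>R x) y w = c * Hq p x y w"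
  by (simp add: Hq_def case_prod_unfold algebra_simps sum_distrib_left)
lemma Hq_sc2: "Hq p x (c *\<^sub>R y) w = c * Hq p x y w"
  by (simp add: Hq_def case_prod_unfold algebra_simps sum_distrib_left)
lemma Hq_sc3: "Hq p x y (c *\<^sub>R w) = c * Hq p x y w"
  by (simp add: Hq_def case_prod_unfold algebra_simps sum_distrib_left HS_scale)

lemma Gq_add1: "Gq (y + y') w x = Gq y w x + Gq y' w x"
  by (simp add: Gq_def case_prod_unfold algebra_simps sum.distrib)
lemma Gq_add2: "Gq y (w + w') x = Gq y w x + Gq y w' x"
  by (simp add: Gq_def case_prod_unfold algebra_simps sum.distrib)
lemma Gq_add3: "Gq y w (x + x') = Gq y w x + Gq y w x'"
  by (simp add: Gq_def case_prod_unfold algebra_simps sum.distrib)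
lemma Gq_sc1: "Gq (c *\<^sub>R y) w x = c * Gq y w x"
  by (simp add: Gq_def case_prod_unfold algebra_simps sum_distrib_left)
lemma Gq_sc2: "Gq y (c *\<^sub>R w) x = c * Gq y w x"
  by (simp add: Gq_def case_prod_unfold algebra_simps sum_distrib_left)
lemma Gq_sc3: "Gq y w (c *\<^sub>R x) = c * Gq y w x"
  by (simp add: Gq_def case_prod_unfold algebra_simps sum_distrib_left)

lemma Gq_swap: "Gq y w x = Gq y x w"
  by (simp add: Gq_def mult_ac)

lemma Hq_swap: "Hq p x y w = Hq p y x w"
  unfolding Hq_def
  by (rule sum.reindex_bij_witness[where i="\<lambda>(i,k,j,l). (j,l,i,k)" and j="\<lambda>(i,k,j,l). (j,l,i,k)"])
     (auto simp: HS_sym mult_ac)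

lemma lie3_tz:
  fixes p :: "'n::finite \<Rightarrow> real^3"
  shows "lie3 (tz p)"
proof
  fix x x' y w :: "'n::finite dat" and c :: real
  show "tz p (x + x') y w = tz p x y w + tz p x' y w"
    by (simp add: tz_def Hq_add1 Hq_add2 Hq_add3 Gq_add1 Gq_add2 Gq_add3 algebra_simps)
  show "tz p y (x + x') w = tz p y x w + tz p y x' w"
    by (simp add: tz_def Hq_add1 Hq_add2 Hq_add3 Gq_add1 Gq_add2 Gq_add3 algebra_simps)
  show "tz p y w (x + x') = tz p y w x + tz p y w x'"
    by (simp add: tz_def Hq_add1 Hq_add2 Hq_add3 Gq_add1 Gq_add2 Gq_add3 algebra_simps)
  show "tz p (c *\<^sub>R x) y w = c * tz p x y w"
    by (simp add: tz_def Hq_sc1 Hq_sc2 Hq_sc3 Gq_sc1 Gq_sc2 Gq_sc3 algebra_simps)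
  show "tz p y (c *\<^sub>R x) w = c * tz p y x w"
    by (simp add: tz_def Hq_sc1 Hq_sc2 Hq_sc3 Gq_sc1 Gq_sc2 Gq_sc3 algebra_simps)
  show "tz p y w (c *\<^sub>R x) = c * tz p y w x"
    by (simp add: tz_def Hq_sc1 Hq_sc2 Hq_sc3 Gq_sc1 Gq_sc2 Gq_sc3 algebra_simps)
  show "tz p x y w = - tz p x w y"
    by (simp add: tz_def)
  show "tz p x y w + tz p y w x + tz p w x y = 0"
    using Hq_swap[of p x y w] Hq_swap[of p x w y] Hq_swap[of p y w x]
      Gq_swap[of y w x] Gq_swap[of w x y] Gq_swap[of x y w]
    by (simp add: tz_def algebra_simps)
qed

definition dz :: "'n::finite phase \<Rightarrow> ('n \<Rightarrow> real) \<Rightarrow> ('n \<Rightarrow> 3 \<Rightarrow> ('n \<Rightarrow> real^3) \<Rightarrow> real)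
   \<Rightarrow> ('n \<Rightarrow> 3 \<Rightarrow> 'n \<Rightarrow> 3 \<Rightarrow> ('n \<Rightarrow> real^3) \<Rightarrow> real) \<Rightarrow> 'n dat" where
  "dz z a g h = (\<chi> j. a j, \<chi> i. \<chi> k. g i k (fst z), \<chi> j. \<chi> l. \<chi> i. \<chi> k. h j l i k (fst z))"

lemma sum_UNIV_prod: "(\<Sum>x\<in>(UNIV::('a::finite \<times> 'b::finite) set). F x) = (\<Sum>a\<in>UNIV. \<Sum>b\<in>UNIV. F (a,b))"
  by (simp add: sum.cartesian_product)

lemma aux1: fixes P X Y :: "'a \<Rightarrow> 'b \<Rightarrow> real" shows
 "(\<Sum>j\<in>A. \<Sum>l\<in>B. P j l * (2 * a j * X j l - 2 * b j * Y j l)) * (2 * c * q)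
   = 4 * (\<Sum>j\<in>A. \<Sum>l\<in>B. P j l * q * c * a j * X j l) - 4 * (\<Sum>j\<in>A. \<Sum>l\<in>B. P j l * q * c * b j * Y j l)"
  by (simp add: sum_distrib_right sum_distrib_left sum_subtractf[symmetric] algebra_simps)
lemma aux2: fixes A B X Y Z :: "'a \<Rightarrow> 'b \<Rightarrow> real" shows
 "(\<Sum>i\<in>I. \<Sum>k\<in>K. (4 * A i k - 4 * B i k) - (2 * a i * X i k - 2 * b i * Y i k) * Z i k)
  = 4 * ((\<Sum>i\<in>I. \<Sum>k\<in>K. A i k) - (\<Sum>i\<in>I. \<Sum>k\<in>K. B i k)) - 2 * ((\<Sum>i\<in>I. \<Sum>k\<in>K. a i * X i k * Z i k) - (\<Sum>i\<in>I. \<Sum>k\<in>K. b i * Y i k * Z i k))"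
proof -
  have "(\<Sum>i\<in>I. \<Sum>k\<in>K. (4 * A i k - 4 * B i k) - (2 * a i * X i k - 2 * b i * Y i k) * Z i k)
     = (\<Sum>i\<in>I. \<Sum>k\<in>K. 4 * A i k - 4 * B i k - (2 * (a i * X i k * Z i k) - 2 * (b i * Y i k * Z i k)))"
    by (simp add: algebra_simps)
  also have "\<dots> = 4 * ((\<Sum>i\<in>I. \<Sum>k\<in>K. A i k) - (\<Sum>i\<in>I. \<Sum>k\<in>K. B i k)) - 2 * ((\<Sum>i\<in>I. \<Sum>k\<in>K. a i * X i k * Z i k) - (\<Sum>i\<in>I. \<Sum>k\<in>K. b i * Y i k * Z i k))"
    by (simp only: sum_subtractf sum_distrib_left[symmetric]) (simp add: algebra_simps)
  finally show ?thesis .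
qed

lemma lb3_tz:
  assumes r1: "rep f1 a1 W1 g1 h1" and r2: "rep f2 a2 W2 g2 h2" and r3: "rep f3 a3 W3 g3 h3" and inj: "inj (fst z)"
  shows "lb f3 (lb f1 f2) z = tz (snd z) (dz z a3 g3 h3) (dz z a1 g1 h1) (dz z a2 g2 h2)"
proof -
  have s1: "h1 j l i k (fst z) = h1 i k j l (fst z)" and s2: "h2 j l i k (fst z) = h2 i k j l (fst z)" for i k j l
    using r1 r2 inj by (auto simp: rep_def xsm_def)
  have hs1: "HS (snd (snd (dz z a1 g1 h1))) j l i k = h1 j l i k (fst z)" for j l i k
    using s1[of i k j l] by (simp add: HS_def dz_def)
  have hs2: "HS (snd (snd (dz z a2 g2 h2))) j l i k = h2 j l i k (fst z)" for j l i k
    using s2[of i k j l] by (simp add: HS_def dz_def)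
  let ?p = "snd z" and ?x = "fst z"
  have H1: "Hq ?p (dz z a3 g3 h3) (dz z a1 g1 h1) (dz z a2 g2 h2) =
     (\<Sum>i\<in>UNIV. \<Sum>k\<in>UNIV. \<Sum>j\<in>UNIV. \<Sum>l\<in>UNIV. ?p j $ l * ?p i $ k * a3 i * a1 j * h2 j l i k ?x)"
    unfolding Hq_def sum_UNIV_prod by (simp only: hs2 case_prod_conv) (simp add: dz_def)
  have H2: "Hq ?p (dz z a3 g3 h3) (dz z a2 g2 h2) (dz z a1 g1 h1) =
     (\<Sum>i\<in>UNIV. \<Sum>k\<in>UNIV. \<Sum>j\<in>UNIV. \<Sum>l\<in>UNIV. ?p j $ l * ?p i $ k * a3 i * a2 j * h1 j l i k ?x)"
    unfolding Hq_def sum_UNIV_prod by (simp only: hs1 case_prod_conv) (simp add: dz_def)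
  have G1: "Gq (dz z a1 g1 h1) (dz z a2 g2 h2) (dz z a3 g3 h3) = (\<Sum>i\<in>UNIV. \<Sum>k\<in>UNIV. a1 i * g2 i k ?x * g3 i k ?x)"
    unfolding Gq_def sum_UNIV_prod by (simp only: case_prod_conv) (simp add: dz_def)
  have G2: "Gq (dz z a2 g2 h2) (dz z a1 g1 h1) (dz z a3 g3 h3) = (\<Sum>i\<in>UNIV. \<Sum>k\<in>UNIV. a2 i * g1 i k ?x * g3 i k ?x)"
    unfolding Gq_def sum_UNIV_prod by (simp only: case_prod_conv) (simp add: dz_def)
  show ?thesis
    unfolding rep_lb3[OF r1 r2 r3 inj] tz_def H1 H2 G1 G2 Fb_def aux1 aux2 ..
qed

lemma rep_a:
  assumes "rep f a W g h"
  shows "a j = f (x, (\<lambda>_. 0)(j := axis 1 1)) - f (x, \<lambda>_. 0)"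
proof -
  have "(\<Sum>i\<in>UNIV. a i * (norm (((\<lambda>_. 0)(j := axis 1 (1::real))) i :: real^3))\<^sup>2) = (\<Sum>i\<in>UNIV. if i = j then a j else 0)"
    by (intro sum.cong) auto
  then show ?thesis using assms by (simp add: rep_def)
qed

lemma rep_unique:
  assumes r: "rep f a W g h" and r': "rep f a' W' g' h'" and inj: "inj (fst z)"
  shows "dz z a g h = dz z a' g' h'"
proof -
  have a: "a = a'" using rep_a[OF r] rep_a[OF r'] by (intro ext) metis
  have gg: "g i k y = g' i k y" if "inj y" for i k y
    using rep_dxi[OF r, of "(y, snd z)"] rep_dxi[OF r', of "(y, snd z)"] that by simp
  have hh: "h j l i k (fst z) = h' j l i k (fst z)" for j l i k
  proof -
    let ?xt = "\<lambda>t. (fst z)(i := fst z i + t *\<^sub>R axis k 1)"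
    have d: "((\<lambda>t. g j l (?xt t)) has_real_derivative h j l i k (fst z)) (at 0)"
      and d': "((\<lambda>t. g' j l (?xt t)) has_real_derivative h' j l i k (fst z)) (at 0)"
      using r r' inj by (auto simp: rep_def xsm_def)
    have ev: "\<forall>\<^sub>F t in nhds 0. g j l (?xt t) = g' j l (?xt t)"
      using line_inj_ev[OF inj, of i "axis k 1"] by eventually_elim (use gg in auto)
    have "((\<lambda>t. g j l (?xt t)) has_real_derivative h' j l i k (fst z)) (at 0)"
      using DERIV_cong_ev[OF refl ev refl] d' by simp
    then show ?thesis using d DERIV_unique by blast
  qed
  show ?thesis unfolding dz_def a by (simp add: vec_eq_iff gg[OF inj] hh)
qed

definition DZ :: "'n::finite phase \<Rightarrow> ('n phase \<Rightarrow> real) \<Rightarrow> 'n dat" where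
  "DZ z f = (SOME d. \<exists>a W g h. rep f a W g h \<and> d = dz z a g h)"

lemma DZ_rep:
  assumes r: "rep f a W g h" and inj: "inj (fst z)"
  shows "DZ z f = dz z a g h"
  unfolding DZ_def
proof (rule someI2)
  show "\<exists>a' W' g' h'. rep f a' W' g' h' \<and> dz z a g h = dz z a' g' h'" using r by blast
next
  fix d assume "\<exists>a' W' g' h'. rep f a' W' g' h' \<and> d = dz z a' g' h'"
  then show "d = dz z a g h" using rep_unique[OF r _ inj] by metis
qed

definition hasrep :: "('n::finite phase \<Rightarrow> real) \<Rightarrow> bool" where
  "hasrep f \<longleftrightarrow> (\<exists>a W g h. rep f a W g h)"

lemma lb3_DZ:
  assumes "hasrep f1" "hasrep f2" "hasrep f3" "inj (fst z)"
  shows "lb f3 (lb f1 f2) z = tz (snd z) (DZ z f3) (DZ z f1) (DZ z f2)"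
proof -
  obtain a1 W1 g1 h1 a2 W2 g2 h2 a3 W3 g3 h3 where r1: "rep f1 a1 W1 g1 h1" and r2: "rep f2 a2 W2 g2 h2"
    and r3: "rep f3 a3 W3 g3 h3" using assms(1-3) unfolding hasrep_def by blast
  show ?thesis unfolding lb3_tz[OF r1 r2 r3 assms(4)] DZ_rep[OF r1 assms(4)] DZ_rep[OF r2 assms(4)] DZ_rep[OF r3 assms(4)] ..
qed

lemma dz_add: "dz z (\<lambda>j. a1 j + a2 j) (\<lambda>i k x. g1 i k x + g2 i k x) (\<lambda>j l i k x. h1 j l i k x + h2 j l i k x)
   = dz z a1 g1 h1 + dz z a2 g2 h2"
  by (simp add: dz_def vec_eq_iff)

lemma dz_scale: "dz z (\<lambda>j. c * a j) (\<lambda>i k x. c * g i k x) (\<lambda>j l i k x. c * h j l i k x) = c *\<^sub>R dz z a g h"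
  by (simp add: dz_def vec_eq_iff)

lemma DZ_add:
  assumes "hasrep f1" "hasrep f2" "inj (fst z)"
  shows "hasrep (\<lambda>z. f1 z + f2 z)" "DZ z (\<lambda>z. f1 z + f2 z) = DZ z f1 + DZ z f2"
proof -
  obtain a1 W1 g1 h1 a2 W2 g2 h2 where r1: "rep f1 a1 W1 g1 h1" and r2: "rep f2 a2 W2 g2 h2"
    using assms unfolding hasrep_def by blast
  note r = rep_add[OF r1 r2]
  show "hasrep (\<lambda>z. f1 z + f2 z)" using r unfolding hasrep_def by blast
  show "DZ z (\<lambda>z. f1 z + f2 z) = DZ z f1 + DZ z f2"
    unfolding DZ_rep[OF r assms(3)] DZ_rep[OF r1 assms(3)] DZ_rep[OF r2 assms(3)] dz_add ..
qed

lemma DZ_scale: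
  assumes "hasrep f" "inj (fst z)"
  shows "hasrep (\<lambda>z. c * f z)" "DZ z (\<lambda>z. c * f z) = c *\<^sub>R DZ z f"
proof -
  obtain a W g h where r: "rep f a W g h" using assms unfolding hasrep_def by blast
  note r' = rep_scale[OF r, of c]
  show "hasrep (\<lambda>z. c * f z)" using r' unfolding hasrep_def by blast
  show "DZ z (\<lambda>z. c * f z) = c *\<^sub>R DZ z f"
    unfolding DZ_rep[OF r' assms(2)] DZ_rep[OF r assms(2)] dz_scale ..
qed

lemma sum_list_negf': "sum_list (map (\<lambda>p. - f p) L) = - sum_list (map f L :: real list)"
  by (induction L) auto

context lie3
begin

lemma sym_pot:
  assumes K1: "\<And>x u w. pot u \<Longrightarrow> pot w \<Longrightarrow> t x u w = 0" and "pot u" "pot w"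
  shows "t u w x = t w u x"
  using t_jac[of u w x] t_anti[of w x u] K1[OF assms(2,3), of x] by simp

lemma t_sum_list3: "t x y (sum_list (map f L)) = sum_list (map (\<lambda>p. t x y (f p)) L)"
  by (induction L) (auto simp: t_add3)
lemma t_sum_list2: "t x (sum_list (map f L)) y = sum_list (map (\<lambda>p. t x (f p) y) L)"
  by (induction L) (auto simp: t_add2)
lemma t_sum_list1: "t (sum_list (map f L)) x y = sum_list (map (\<lambda>p. t (f p) x y) L)"
  by (induction L) (auto simp: t_add1)

lemma half2: "(1/2) *\<^sub>R v + (1/2) *\<^sub>R v = (v::'v)"
  by (simp flip: scaleR_add_left)

definition Mid :: "('a \<Rightarrow> 'v) \<Rightarrow> ('a \<Rightarrow> 'v) \<Rightarrow> 'v \<Rightarrow> 'a list \<Rightarrow> (real \<times> 'v) list" where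
  "Mid TT VV C ps = concat (map (\<lambda>p. [(- 1/2, TT p), (1/2, TT p + VV p)]) ps) @ [(2/3, C)]
      @ concat (map (\<lambda>p. [(1/2, TT p + VV p), (- 1/2, TT p)]) (rev ps))"

lemma Mid_Cons: "Mid TT VV C (p # ps) = [(- 1/2, TT p), (1/2, TT p + VV p)] @ Mid TT VV C ps @ [(1/2, TT p + VV p), (- 1/2, TT p)]"
  by (simp add: Mid_def)

lemma Mid_facts:
  assumes K1: "\<And>x u w. pot u \<Longrightarrow> pot w \<Longrightarrow> t x u w = 0"
    and pot_add: "\<And>u w. pot u \<Longrightarrow> pot w \<Longrightarrow> pot (u + w)"
    and pot_scale: "\<And>u c. pot u \<Longrightarrow> pot (c *\<^sub>R u)" and pot0: "pot 0"
    and potC: "pot C" and potV: "\<And>p. p \<in> set ps \<Longrightarrow> pot (VV p)"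
    and K2a: "\<And>p x. p \<in> set ps \<Longrightarrow> t x (TT p) (VV p) = t x Tf (VV p)"
    and K2b: "\<And>p. p \<in> set ps \<Longrightarrow> t (TT p) (TT p) (VV p) = t Tf Tf (VV p)"
  shows "(\<forall>w. P2 (Mid TT VV C ps) w = 0) \<and> S1 (Mid TT VV C ps) = sum_list (map VV ps) + (2/3) *\<^sub>R C
     \<and> E3 (Mid TT VV C ps) = sum_list (map (\<lambda>p. t Tf Tf (VV p)) ps) / 24
        + sum_list (map (\<lambda>p. t (VV p) Tf (VV p)) ps) / 12
        + sum_list (map (\<lambda>p. t C Tf (VV p)) ps) / 12
        - (t (sum_list (map VV ps)) (sum_list (map VV ps)) Tf + sum_list (map (\<lambda>p. t (VV p) Tf (VV p)) ps)) / 16"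
  using potV K2a K2b
proof (induction ps)
  case Nil
  have "Mid TT VV C [] = [(2/3, C)]" by (simp add: Mid_def)
  then show ?case by (simp add: E3_single)
next
  case (Cons p ps)
  let ?Q = "Mid TT VV C ps"
  let ?B = "[(- 1/2, TT p), (1/2, TT p + VV p)]" and ?B' = "[(1/2, TT p + VV p), (- 1/2, TT p)]"
  let ?Vs = "sum_list (map VV ps)"
  have IH: "(\<forall>w. P2 ?Q w = 0) \<and> S1 ?Q = ?Vs + (2/3) *\<^sub>R C
     \<and> E3 ?Q = sum_list (map (\<lambda>p. t Tf Tf (VV p)) ps) / 24
        + sum_list (map (\<lambda>p. t (VV p) Tf (VV p)) ps) / 12
        + sum_list (map (\<lambda>p. t C Tf (VV p)) ps) / 12
        - (t ?Vs ?Vs Tf + sum_list (map (\<lambda>p. t (VV p) Tf (VV p)) ps)) / 16"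
    using Cons by auto
  have pV: "pot (VV p)" using Cons by auto
  have pVs: "pot ?Vs" using Cons.prems(1) by (induction ps) (auto intro: pot_add pot0)
  have a1: "t x (TT p) (VV p) = t x Tf (VV p)" for x using Cons by auto
  have a2: "t (TT p) Tf (VV p) = t Tf Tf (VV p)" using Cons a1[of "TT p"] by auto
  have a3: "t x (VV p) (TT p) = - t x Tf (VV p)" for x using a1[of x] t_anti[of x "VV p" "TT p"] by simp
  have z: "t x (VV p) ?Vs = 0" "t x ?Vs (VV p) = 0" "t x (VV p) C = 0" "t x C (VV p) = 0"
     "t x C ?Vs = 0" "t x ?Vs C = 0" for x
    using K1 pV pVs potC by auto
  have PB: "P2 ?B' w = - P2 ?B w" for w by (simp add: P2_two t_anti[of w "(1/2) *\<^sub>R (TT p + VV p)"])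
  have EB: "E3 ?B' = E3 ?B" by (simp add: E3_two)
  have SB: "S1 ?B' = S1 ?B" by (simp add: S1_two)
  have Q0: "P2 ?Q w = 0" for w using IH by auto
  note sw = sandwich[OF Q0 PB EB SB]
  have SB2: "S1 ?B = (1/2) *\<^sub>R VV p" by (simp add: S1_two algebra_simps)
  have sy: "t (VV p) ?Vs Tf = t ?Vs (VV p) Tf" using sym_pot[OF K1 pV pVs] .
  have an1: "t ?Vs (VV p) Tf = - t ?Vs Tf (VV p)" "t (VV p) (VV p) Tf = - t (VV p) Tf (VV p)"
    by (rule t_anti)+
  have "E3 (Mid TT VV C (p # ps)) = E3 ?Q + 2 * E3 ?B - P2 ?B (S1 ?Q) / 2 - P2 ?B (S1 ?B) / 2
            - t (S1 ?B) (S1 ?B) (S1 ?Q) / 6 + t (S1 ?Q) (S1 ?Q) (S1 ?B) / 6"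
    unfolding Mid_Cons by (rule sw(1))
  also have "\<dots> = E3 ?Q + t Tf Tf (VV p) / 24 + t (VV p) Tf (VV p) / 12 + t ?Vs Tf (VV p) / 8 + t C Tf (VV p) / 12"
    unfolding SB2 IH[THEN conjunct2, THEN conjunct1] E3_two P2_two
    by (simp add: t_lin a1 a2 a3 z field_simps)
  finally have E: "E3 (Mid TT VV C (p # ps)) = \<dots>" .
  show ?case
  proof (intro conjI allI)
    fix w show "P2 (Mid TT VV C (p # ps)) w = 0" unfolding Mid_Cons by (rule sw(2))
  next
    show "S1 (Mid TT VV C (p # ps)) = sum_list (map VV (p # ps)) + (2/3) *\<^sub>R C"
      unfolding Mid_Cons sw(3) SB2 IH[THEN conjunct2, THEN conjunct1]
      using half2[of "VV p"] by (simp add: algebra_simps)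
  next
    show "E3 (Mid TT VV C (p # ps)) = sum_list (map (\<lambda>p. t Tf Tf (VV p)) (p # ps)) / 24
        + sum_list (map (\<lambda>p. t (VV p) Tf (VV p)) (p # ps)) / 12
        + sum_list (map (\<lambda>p. t C Tf (VV p)) (p # ps)) / 12
        - (t (sum_list (map VV (p # ps))) (sum_list (map VV (p # ps))) Tf + sum_list (map (\<lambda>p. t (VV p) Tf (VV p)) (p # ps))) / 16"
      unfolding E IH[THEN conjunct2, THEN conjunct2] using sy an1
      by (simp add: t_add1 t_add2 field_simps)
  qed
qed

lemma final_abstract:
  assumes K1: "\<And>x u w. pot u \<Longrightarrow> pot w \<Longrightarrow> t x u w = 0"
    and pot_add: "\<And>u w. pot u \<Longrightarrow> pot w \<Longrightarrow> pot (u + w)"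
    and pot_scale: "\<And>u c. pot u \<Longrightarrow> pot (c *\<^sub>R u)" and pot0: "pot 0"
    and potC: "pot C" and potV: "\<And>p. p \<in> set ps \<Longrightarrow> pot (VV p)"
    and K2a: "\<And>p x. p \<in> set ps \<Longrightarrow> t x (TT p) (VV p) = t x Tf (VV p)"
    and K2b: "\<And>p. p \<in> set ps \<Longrightarrow> t (TT p) (TT p) (VV p) = t Tf Tf (VV p)"
  shows "E3 ([(1/6, C), (1/2, Tf)] @ Mid TT VV C ps @ [(1/2, Tf), (1/6, C)])
     = (t (sum_list (map VV ps)) (sum_list (map VV ps)) Tf - sum_list (map (\<lambda>p. t (VV p) (VV p) Tf) ps)) / 48
       + t C C Tf / 72"
proof -
  let ?Q = "Mid TT VV C ps" and ?Vs = "sum_list (map VV ps)"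
  let ?B = "[(1/6, C), (1/2, Tf)]" and ?B' = "[(1/2, Tf), (1/6, C)]"
  note MF = Mid_facts[where ps=ps and VV=VV and TT=TT and C=C and Tf=Tf and pot=pot, OF K1 pot_add pot_scale pot0 potC potV K2a K2b]
  have Q0: "P2 ?Q w = 0" for w using MF by auto
  have SQ: "S1 ?Q = ?Vs + (2/3) *\<^sub>R C" using MF by auto
  have EQ: "E3 ?Q = sum_list (map (\<lambda>p. t Tf Tf (VV p)) ps) / 24
        + sum_list (map (\<lambda>p. t (VV p) Tf (VV p)) ps) / 12
        + sum_list (map (\<lambda>p. t C Tf (VV p)) ps) / 12
        - (t ?Vs ?Vs Tf + sum_list (map (\<lambda>p. t (VV p) Tf (VV p)) ps)) / 16" using MF by auto
  have PB: "P2 ?B' w = - P2 ?B w" for w by (simp add: P2_two t_anti[of w "(1/2) *\<^sub>R Tf"])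
  have EB: "E3 ?B' = E3 ?B" by (simp add: E3_two)
  have SB: "S1 ?B' = S1 ?B" by (simp add: S1_two)
  note sw = sandwich[OF Q0 PB EB SB]
  have pVs: "pot ?Vs" using potV by (induction ps) (auto intro: pot_add pot0)
  have z: "t x C ?Vs = 0" "t x ?Vs C = 0" for x using K1 pVs potC by auto
  have sy: "t ?Vs C Tf = t C ?Vs Tf" using sym_pot[OF K1 pVs potC] .
  have an: "t C ?Vs Tf = - t C Tf ?Vs" "t C Tf C = - t C C Tf" "t Tf C Tf = - t Tf Tf C"
    by (rule t_anti)+
  have s1: "t Tf Tf ?Vs = sum_list (map (\<lambda>p. t Tf Tf (VV p)) ps)" by (rule t_sum_list3)
  have s2: "t C Tf ?Vs = sum_list (map (\<lambda>p. t C Tf (VV p)) ps)" by (rule t_sum_list3)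
  have s3: "sum_list (map (\<lambda>p. t (VV p) (VV p) Tf) ps) = - sum_list (map (\<lambda>p. t (VV p) Tf (VV p)) ps)"
  proof -
    have "sum_list (map (\<lambda>p. t (VV p) (VV p) Tf) ps) = sum_list (map (\<lambda>p. - t (VV p) Tf (VV p)) ps)"
      by (rule arg_cong[where f=sum_list], rule map_cong[OF refl], rule t_anti)
    then show ?thesis by (simp add: sum_list_negf')
  qed
  show ?thesis
    unfolding sw(1) SQ EQ E3_two P2_two S1_two s3
    using z sy an s1 s2 by (simp add: t_lin field_simps)
qed

end

lemma hasrep_add: "hasrep f1 \<Longrightarrow> hasrep f2 \<Longrightarrow> hasrep (\<lambda>z. f1 z + f2 z)"
  unfolding hasrep_def using rep_add by blast
lemma hasrep_scale: "hasrep f \<Longrightarrow> hasrep (\<lambda>z. c * f z)"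
  unfolding hasrep_def using rep_scale by blast
lemma hasrep_zero: "hasrep (\<lambda>z. 0)"
  unfolding hasrep_def using rep_zero by blast

lemma zero_vec: "(\<chi> i. 0) = 0" by (simp add: vec_eq_iff)

lemma DZ_zero: "inj (fst z) \<Longrightarrow> DZ z (\<lambda>z. 0) = 0"
  using DZ_rep[OF rep_zero, of z] by (simp add: dz_def zero_vec zero_prod_def)

lemma hasrep_sum: "(\<And>s. s \<in> A \<Longrightarrow> hasrep (F s)) \<Longrightarrow> hasrep (\<lambda>z. \<Sum>s\<in>A. F s z)"
  by (induction A rule: infinite_finite_induct) (auto simp: hasrep_zero intro!: hasrep_add)

lemma hasrep_sum_list: "(\<And>s. s \<in> set L \<Longrightarrow> hasrep (F s)) \<Longrightarrow> hasrep (\<lambda>z. sum_list (map (\<lambda>s. F s z) L))"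
  by (induction L) (auto simp: hasrep_zero intro!: hasrep_add)

lemma DZ_sum:
  assumes "\<And>s. s \<in> A \<Longrightarrow> hasrep (F s)" "inj (fst z)"
  shows "DZ z (\<lambda>z. \<Sum>s\<in>A. F s z) = (\<Sum>s\<in>A. DZ z (F s))"
  using assms(1)
proof (induction A rule: infinite_finite_induct)
  case (infinite A)
  then show ?case using DZ_zero[OF assms(2)] by simp
next
  case empty
  then show ?case using DZ_zero[OF assms(2)] by simp
next
  case (insert s A)
  have h: "hasrep (F s)" "hasrep (\<lambda>z. \<Sum>s\<in>A. F s z)" using insert by (auto intro!: hasrep_sum)
  show ?case using insert DZ_add(2)[OF h(1,2) assms(2)] by simp
qed

lemma DZ_sum_list:
  assumes "\<And>s. s \<in> set L \<Longrightarrow> hasrep (F s)" "inj (fst z)"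
  shows "DZ z (\<lambda>z. sum_list (map (\<lambda>s. F s z) L)) = sum_list (map (\<lambda>s. DZ z (F s)) L)"
  using assms(1)
proof (induction L)
  case Nil
  then show ?case using DZ_zero[OF assms(2)] by simp
next
  case (Cons s L)
  have h: "hasrep (F s)" "hasrep (\<lambda>z. sum_list (map (\<lambda>s. F s z) L))" using Cons by (auto intro!: hasrep_sum_list)
  show ?case using Cons DZ_add(2)[OF h(1,2) assms(2)] by simp
qed

lemma Vp_same: "Vp G m i i = (\<lambda>z. 0)"
  by (auto simp: Vp_def)

lemma hasrep_Tk: "hasrep (Tk m k)" using rep_Tk unfolding hasrep_def by blast

lemma hasrep_Vp: "hasrep (Vp G m i j)"
proof (cases "i = j")
  case True
  then show ?thesis by (simp add: Vp_same hasrep_zero)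
next
  case False
  then show ?thesis unfolding hasrep_def using rep_Vp by blast
qed

lemma Tkin_eq: "Tkin m = (\<lambda>z. \<Sum>k\<in>UNIV. Tk m k z)" by (simp add: Tkin_def fun_eq_iff)
lemma Vpot_eq: "Vpot G m = (\<lambda>z. (1/2) * (\<Sum>i\<in>UNIV. \<Sum>j\<in>UNIV. if i \<noteq> j then Vp G m i j z else 0))"
  by (simp add: Vpot_def fun_eq_iff)
lemma Vs_eq: "Vs G m ps = (\<lambda>z. sum_list (map (\<lambda>p. Vp G m (fst p) (snd p) z) ps))"
  by (simp add: Vs_def fun_eq_iff case_prod_unfold)
lemma Vc_eq: "Vc G m ps = (\<lambda>z. Vpot G m z + (- 1) * Vs G m ps z)"
  by (simp add: Vc_def fun_eq_iff)
lemma Hpair_eq: "Hpair G m i j = (\<lambda>z. (Tk m i z + Tk m j z) + Vp G m i j z)"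
  by (simp add: Hpair_def fun_eq_iff)

lemma hasrep_if: "hasrep f \<Longrightarrow> hasrep (\<lambda>z. if P then f z else 0)"
  by (cases P) (auto simp: hasrep_zero)

lemma hasrep_Tkin: "hasrep (Tkin m)"
  unfolding Tkin_eq by (intro hasrep_sum hasrep_Tk)

lemma hasrep_Vpot: "hasrep (Vpot G m)"
  unfolding Vpot_eq by (intro hasrep_scale hasrep_sum hasrep_if hasrep_Vp)

lemma hasrep_Vs: "hasrep (Vs G m ps)"
  unfolding Vs_eq by (intro hasrep_sum_list hasrep_Vp)

lemma hasrep_Vc: "hasrep (Vc G m ps)"
  unfolding Vc_eq by (intro hasrep_add hasrep_scale hasrep_Vpot hasrep_Vs)

lemma hasrep_T2: "hasrep (\<lambda>z. Tk m i z + Tk m j z)"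
  by (intro hasrep_add hasrep_Tk)

lemma hasrep_Hpair: "hasrep (Hpair G m i j)"
  unfolding Hpair_eq by (intro hasrep_add hasrep_Tk hasrep_Vp)

lemma hasrep_KDBK2: "\<forall>x\<in>set (KDBK2 G m ps). hasrep (snd x)"
  by (auto simp: KDBK2_def phi_s_def phi_s_dag_def hasrep_Vc hasrep_Tkin hasrep_T2 hasrep_Hpair)

lemma surr2_E3:
  assumes hr: "\<forall>x\<in>set fs. hasrep (snd x)" and inj: "inj (fst z)"
  shows "surr fs 2 z = lie3.E3 (tz (snd z)) (map (\<lambda>(c,f). (c, DZ z f)) fs)"
proof -
  interpret L: lie3 "tz (snd z)" by (rule lie3_tz)
  let ?ds = "map (\<lambda>(c,f). (c, DZ z f)) fs"
  have "surr fs 2 z = (\<Sum>w\<in>{w. length w = 3 \<and> set w \<subseteq> {..<length fs}}.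
      logcoef w * prod_list (map (\<lambda>a. fst (fs ! a)) w) / 3 * nestf fs w z)"
    by (simp add: surr_def Let_def numeral_3_eq_3)
  also have "\<dots> = L.E3 ?ds" unfolding L.E3_def length_map
  proof (rule sum.cong[OF refl])
    fix w assume "w \<in> {w. length w = 3 \<and> set w \<subseteq> {..<length fs}}"
    then have l: "length w = 3" and s: "set w \<subseteq> {..<length fs}" by auto
    from l obtain a b c where w: "w = [a,b,c]" by (auto simp: length_Suc_conv numeral_3_eq_3)
    have lt: "a < length fs" "b < length fs" "c < length fs" using s w by auto
    have h: "hasrep (snd (fs ! a))" "hasrep (snd (fs ! b))" "hasrep (snd (fs ! c))"
      using hr lt by auto
    have "nestf fs w z = tz (snd z) (DZ z (snd (fs ! a))) (DZ z (snd (fs ! b))) (DZ z (snd (fs ! c)))"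
      unfolding w using lb3_DZ[OF h(2) h(3) h(1) inj] by simp
    then show "logcoef w * prod_list (map (\<lambda>a. fst (fs ! a)) w) / 3 * nestf fs w z =
      logcoef w * prod_list (map (\<lambda>a. fst (?ds ! a)) w) / 3 * L.tt ?ds w"
      using w lt by (simp add: case_prod_unfold)
  qed
  finally show ?thesis .
qed

definition vanish :: "'n set \<Rightarrow> 'n::finite dat \<Rightarrow> bool" where
  "vanish P d \<longleftrightarrow> fst d = 0 \<and> (\<forall>i k. i \<notin> P \<longrightarrow> fst (snd d) $ i $ k = 0)
     \<and> (\<forall>j l i k. j \<notin> P \<or> i \<notin> P \<longrightarrow> snd (snd d) $ j $ l $ i $ k = 0)"

definition tlike :: "'n::finite dat \<Rightarrow> bool" where
  "tlike d \<longleftrightarrow> fst (snd d) = 0 \<and> snd (snd d) = 0"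

lemma K1c: "fst u = 0 \<Longrightarrow> fst w = 0 \<Longrightarrow> tz p x u w = 0"
  by (simp add: tz_def Hq_def Gq_def)

lemma HS_vanish1: "vanish P V \<Longrightarrow> j \<notin> P \<Longrightarrow> HS (snd (snd V)) j l i k = 0"
  unfolding vanish_def HS_def by auto
lemma HS_vanish2: "vanish P V \<Longrightarrow> i \<notin> P \<Longrightarrow> HS (snd (snd V)) j l i k = 0"
  unfolding vanish_def HS_def by auto

lemma K2a_c:
  assumes V: "vanish P V" and T: "tlike T" "tlike T'" and ag: "\<And>j. j \<in> P \<Longrightarrow> fst T $ j = fst T' $ j"
  shows "tz p x T V = tz p x T' V"
proof -
  have fV: "fst V = 0" using V by (simp add: vanish_def)
  have "Hq p x T V = Hq p x T' V" unfolding Hq_def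
  proof (intro sum.cong refl)
    fix q :: "'a \<times> 3 \<times> 'a \<times> 3"
    obtain i k j l where q: "q = (i,k,j,l)" by (cases q) auto
    show "(case q of (i, k, j, l) \<Rightarrow> p j $ l * p i $ k * fst x $ i * fst T $ j * HS (snd (snd V)) j l i k) =
          (case q of (i, k, j, l) \<Rightarrow> p j $ l * p i $ k * fst x $ i * fst T' $ j * HS (snd (snd V)) j l i k)"
      unfolding q by (cases "j \<in> P") (auto simp: ag HS_vanish1[OF V])
  qed
  moreover have "Gq T V x = Gq T' V x" unfolding Gq_def
    by (intro sum.cong refl) (use ag V in \<open>auto simp: case_prod_unfold vanish_def\<close>)
  ultimately show ?thesis by (simp add: tz_def Hq_def Gq_def fV)
qed

lemma K2b_c:
  assumes V: "vanish P V" and T: "tlike T" "tlike T'" and ag: "\<And>j. j \<in> P \<Longrightarrow> fst T $ j = fst T' $ j"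
  shows "tz p T x V = tz p T' x V"
proof -
  have fV: "fst V = 0" using V by (simp add: vanish_def)
  have "Hq p T x V = Hq p T' x V" unfolding Hq_def
  proof (intro sum.cong refl)
    fix q :: "'a \<times> 3 \<times> 'a \<times> 3"
    obtain i k j l where q: "q = (i,k,j,l)" by (cases q) auto
    show "(case q of (i, k, j, l) \<Rightarrow> p j $ l * p i $ k * fst T $ i * fst x $ j * HS (snd (snd V)) j l i k) =
          (case q of (i, k, j, l) \<Rightarrow> p j $ l * p i $ k * fst T' $ i * fst x $ j * HS (snd (snd V)) j l i k)"
      unfolding q by (cases "i \<in> P") (auto simp: ag HS_vanish2[OF V])
  qed
  moreover have "Gq x V T = 0" "Gq x V T' = 0" using T by (auto simp: Gq_def tlike_def)
  ultimately show ?thesis by (simp add: tz_def Hq_def Gq_def fV)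
qed

lemma DZ_Vp_vanish:
  assumes inj: "inj (fst z)"
  shows "vanish {i,j} (DZ z (Vp G m i j))"
proof (cases "i = j")
  case True
  then show ?thesis using DZ_zero[OF inj] by (simp add: Vp_same vanish_def)
next
  case False
  show ?thesis unfolding DZ_rep[OF rep_Vp[OF False] inj]
    by (auto simp: vanish_def dz_def zero_vec gV_def hV_def sg2_def)
qed

lemma rep_Tkin: "rep (Tkin m) (\<lambda>j. 1 / (2 * m j)) (\<lambda>x. 0) (\<lambda>i k x. 0) (\<lambda>j l i k x. 0)"
  by (simp add: rep_def xsm_zero Tkin_def Tk_def)

lemma DZ_Tkin: "inj (fst z) \<Longrightarrow> DZ z (Tkin m) = (\<chi> j. 1 / (2 * m j), 0, 0)"
  using DZ_rep[OF rep_Tkin] by (simp add: dz_def zero_vec)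

lemma DZ_T2: "inj (fst z) \<Longrightarrow> DZ z (\<lambda>z. Tk m i z + Tk m j z) = (\<chi> l. aT m i l + aT m j l, 0, 0)"
  using DZ_rep[OF rep_add[OF rep_Tk rep_Tk]] by (simp add: dz_def zero_vec)

lemma fst_DZ_pot:
  assumes "hasrep f" "\<And>x q q'. f (x, q) = f (x, q')" "inj (fst z)"
  shows "fst (DZ z f) = 0"
proof -
  obtain a W g h where r: "rep f a W g h" using assms(1) unfolding hasrep_def by blast
  have "a j = 0" for j using rep_a[OF r, of j "fst z"] assms(2)[of "fst z" "(\<lambda>_. 0)(j := axis 1 1)" "\<lambda>_. 0"] by simp
  then show ?thesis unfolding DZ_rep[OF r assms(3)] by (simp add: dz_def zero_vec vec_eq_iff)
qed

lemma DZ_Hpair: "inj (fst z) \<Longrightarrow> DZ z (Hpair G m i j) = DZ z (\<lambda>z. Tk m i z + Tk m j z) + DZ z (Vp G m i j)"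
  unfolding Hpair_eq by (rule DZ_add(2)[OF hasrep_T2 hasrep_Vp])

lemma ds_eq:
  assumes inj: "inj (fst z)"
  shows "map (\<lambda>(c,f). (c, DZ z f)) (KDBK2 G m ps) =
    [(1/6, DZ z (Vc G m ps)), (1/2, DZ z (Tkin m))]
    @ lie3.Mid (\<lambda>p. DZ z (\<lambda>z. Tk m (fst p) z + Tk m (snd p) z)) (\<lambda>p. DZ z (Vp G m (fst p) (snd p))) (DZ z (Vc G m ps)) ps
    @ [(1/2, DZ z (Tkin m)), (1/6, DZ z (Vc G m ps))]"
  by (simp add: KDBK2_def phi_s_def phi_s_dag_def lie3.Mid_def[OF lie3_tz] map_concat case_prod_unfold DZ_Hpair[OF inj] o_def)

lemma poisson2_DZ:
  assumes "hasrep A" "hasrep B" "inj (fst z)"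
  shows "poisson (poisson A B) B z = tz (snd z) (DZ z B) (DZ z B) (DZ z A)"
  using lb3_DZ[OF assms(2) assms(1) assms(2) assms(3)] by (simp add: lb_def)

lemma DZ_Vs: "inj (fst z) \<Longrightarrow> DZ z (Vs G m ps) = sum_list (map (\<lambda>p. DZ z (Vp G m (fst p) (snd p))) ps)"
  unfolding Vs_eq by (rule DZ_sum_list) (auto intro: hasrep_Vp)

lemma surr0:
  "surr fs 0 z = sum_list (map (\<lambda>(c,f). c * f z) fs)"
proof -
  have W: "{w. length w = Suc 0 \<and> set w \<subseteq> {..<length fs}} = (\<lambda>a. [a]) ` {..<length fs}"
    by (auto simp: length_Suc_conv)
  have inj: "inj_on (\<lambda>a. [a]) {..<length fs}" by (auto intro: inj_onI)
  have lc: "logcoef [a] = 1" for a by (simp add: logcoef_comps ncoef1)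
  have "surr fs 0 z = (\<Sum>a<length fs. fst (fs ! a) * snd (fs ! a) z)"
    unfolding surr_def Let_def W by (simp add: sum.reindex[OF inj] lc)
  also have "\<dots> = sum_list (map (\<lambda>(c,f). c * f z) fs)"
    by (simp add: sum_list_sum_nth atLeast0LessThan case_prod_unfold)
  finally show ?thesis .
qed

lemma sum_list_concat_map: "sum_list (map h (concat xss)) = sum_list (map (\<lambda>xs. sum_list (map h xs)) xss)"
  by (induction xss) auto

lemma sum_list_map_rev: "sum_list (map f (rev xs)) = sum_list (map f xs :: real list)"
  by (induction xs) auto

lemma surr0_KDBK2: "surr (KDBK2 G m ps) 0 z = Ham G m z"
proof -
  have b1: "sum_list (map (\<lambda>(c,f). c * f z) (concat (map (\<lambda>(i,j). [(-1/2, \<lambda>z. Tk m i z + Tk m j z), (1/2, Hpair G m i j)]) ps)))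
     = Vs G m ps z / 2"
    by (induction ps) (auto simp: Vs_def Hpair_def field_simps)
  have b2: "sum_list (map (\<lambda>(c,f). c * f z) (concat (map (\<lambda>(i,j). [(1/2, Hpair G m i j), (-1/2, \<lambda>z. Tk m i z + Tk m j z)]) (rev ps))))
     = Vs G m ps z / 2"
    by (induction ps) (auto simp: Vs_def Hpair_def field_simps)
  show ?thesis unfolding surr0 KDBK2_def phi_s_def phi_s_dag_def map_append sum_list_append b1 b2
    by (simp add: Ham_def Vc_def field_simps)
qed

lemma rev_KDBK2: "rev (KDBK2 G m ps) = KDBK2 G m ps"
  by (simp add: KDBK2_def phi_s_def phi_s_dag_def rev_concat rev_map o_def case_prod_unfold)

lemma Vp_pair: "Vp G m i j (x, q) = - G * m i * m j / dist (x i) (x j)" by (simp add: Vp_def)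

theorem mainTheorem8:
  fixes G :: real and m :: "'n::finite \<Rightarrow> real"
    and S :: "'n set set" and ps :: "('n \<times> 'n) list"
  assumes "G > 0" and "\<And>i. m i > 0"
    and "\<forall>(i,j)\<in>set ps. i \<noteq> j"
    and "distinct (map (\<lambda>(i,j). {i,j}) ps)"
    and "set (map (\<lambda>(i,j). {i,j}) ps) = S"
    and "inj (fst z)"
    and "k < 4"
  shows "surr (KDBK2 G m ps) k z - (if k = 0 then Ham G m z else 0)
       = (if k = 2 then (1/48) * TVsVs3 G m ps z
            + (1/72) * poisson (poisson (Tkin m) (Vc G m ps)) (Vc G m ps) z
          else 0)"
proof -
  note inj = assms(6)
  have k: "k = 0 \<or> k = 1 \<or> k = 2 \<or> k = 3" using assms(7) by auto
  moreover have ?thesis if "k = 0" using that surr0_KDBK2 by simp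
  moreover have ?thesis if k13: "k = 1 \<or> k = 3"
  proof -
    have "surr (KDBK2 G m ps) k z = 0" by (rule surr_palin[OF rev_KDBK2 k13])
    then show ?thesis using k13 by auto
  qed
  moreover have ?thesis if k2: "k = 2"
  proof -
    let ?p = "snd z"
    let ?C = "DZ z (Vc G m ps)" and ?Tf = "DZ z (Tkin m)"
    let ?TT = "\<lambda>p. DZ z (\<lambda>z. Tk m (fst p) z + Tk m (snd p) z)"
    let ?VV = "\<lambda>p. DZ z (Vp G m (fst p) (snd p))"
    define pot :: "'n dat \<Rightarrow> bool" where "pot d \<longleftrightarrow> fst d = 0" for d
    have K1: "\<And>x u w. pot u \<Longrightarrow> pot w \<Longrightarrow> tz ?p x u w = 0" unfolding pot_def by (rule K1c)
    have pot_add: "\<And>u w. pot u \<Longrightarrow> pot w \<Longrightarrow> pot (u + w)" by (simp add: pot_def)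
    have pot_scale: "\<And>u c. pot u \<Longrightarrow> pot (c *\<^sub>R u)" by (simp add: pot_def)
    have pot0: "pot 0" by (simp add: pot_def)
    have potC: "pot ?C" unfolding pot_def
      by (rule fst_DZ_pot[OF hasrep_Vc _ inj]) (simp only: Vc_def Vpot_def Vs_def Vp_pair)
    have van: "vanish {fst p, snd p} (?VV p)" for p using DZ_Vp_vanish[OF inj] by simp
    have potV: "\<And>p. p \<in> set ps \<Longrightarrow> pot (?VV p)" using van by (simp add: pot_def vanish_def)
    have tl1: "tlike (?TT p)" for p by (simp add: DZ_T2[OF inj] tlike_def)
    have tl2: "tlike ?Tf" by (simp add: DZ_Tkin[OF inj] tlike_def)
    have ag: "fst (?TT p) $ j = fst ?Tf $ j" if "p \<in> set ps" "j \<in> {fst p, snd p}" for p j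
    proof -
      have "fst p \<noteq> snd p" using assms(3) that(1) by auto
      then show ?thesis using that(2) by (auto simp: DZ_T2[OF inj] DZ_Tkin[OF inj] aT_def)
    qed
    have K2a: "\<And>p x. p \<in> set ps \<Longrightarrow> tz ?p x (?TT p) (?VV p) = tz ?p x ?Tf (?VV p)"
      using K2a_c[OF van tl1 tl2] ag by blast
    have K2b: "\<And>p. p \<in> set ps \<Longrightarrow> tz ?p (?TT p) (?TT p) (?VV p) = tz ?p ?Tf ?Tf (?VV p)"
    proof -
      fix p assume p: "p \<in> set ps"
      have "tz ?p (?TT p) (?TT p) (?VV p) = tz ?p (?TT p) ?Tf (?VV p)" using K2a[OF p] .
      also have "\<dots> = tz ?p ?Tf ?Tf (?VV p)" using K2b_c[OF van tl1 tl2] ag p by blast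
      finally show "tz ?p (?TT p) (?TT p) (?VV p) = tz ?p ?Tf ?Tf (?VV p)" .
    qed
    have "surr (KDBK2 G m ps) 2 z = lie3.E3 (tz ?p) ([(1/6, ?C), (1/2, ?Tf)] @ lie3.Mid ?TT ?VV ?C ps @ [(1/2, ?Tf), (1/6, ?C)])"
      unfolding surr2_E3[OF hasrep_KDBK2 inj] ds_eq[OF inj] ..
    also have "\<dots> = (tz ?p (sum_list (map ?VV ps)) (sum_list (map ?VV ps)) ?Tf - sum_list (map (\<lambda>p. tz ?p (?VV p) (?VV p) ?Tf) ps)) / 48
       + tz ?p ?C ?C ?Tf / 72"
      by (rule lie3.final_abstract[OF lie3_tz, where pot=pot, OF K1 pot_add pot_scale pot0 potC potV K2a K2b])
    also have "\<dots> = (1/48) * TVsVs3 G m ps z + (1/72) * poisson (poisson (Tkin m) (Vc G m ps)) (Vc G m ps) z"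
    proof -
      have t1: "poisson (poisson (Tkin m) (Vs G m ps)) (Vs G m ps) z = tz ?p (sum_list (map ?VV ps)) (sum_list (map ?VV ps)) ?Tf"
        using poisson2_DZ[OF hasrep_Tkin hasrep_Vs inj] DZ_Vs[OF inj] by simp
      have t2: "sum_list (map (\<lambda>(i,j). poisson (poisson (Tkin m) (Vp G m i j)) (Vp G m i j) z) ps)
          = sum_list (map (\<lambda>p. tz ?p (?VV p) (?VV p) ?Tf) ps)"
        using poisson2_DZ[OF hasrep_Tkin hasrep_Vp inj] by (simp add: case_prod_unfold)
      have t3: "poisson (poisson (Tkin m) (Vc G m ps)) (Vc G m ps) z = tz ?p ?C ?C ?Tf"
        using poisson2_DZ[OF hasrep_Tkin hasrep_Vc inj] .
      show ?thesis unfolding TVsVs3_def t1 t2 t3 by simp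
    qed
    finally show ?thesis using k2 by simp
  qed
  ultimately show ?thesis by blast
qed

end
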